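(* Let $P$ be a minuscule poset. Then $\sum_{p\in P}\mathbb{1}_p\equiv \frac{\#P}{2}$.
   Context: Minuscule posets are the posets attached to a simple Lie algebra (Dynkin diagram) together with a minuscule node (the poset of join-irreducible elements of the corresponding minuscule weight lattice / Bruhat order on $W/W_J$). Up to isomorphism they are: the rectangles $[a]\times[b]$ (product order); the shifted staircases $\{(i,j)\colon1\le i\le j\le n\}$ with componentwise order; the double-tailed diamonds $d_n(1)$ for $n\ge2$, consisting of a chain $x_1<\dots<x_{n-1}$, two incomparable elements $y_1,y_2$, and a chain $z_{n-1}<\dots<z_1$ with $x_i<y_j<z_k$ for all $i,j,k$; and the two exceptional minuscule posets $\Lambda_{E_6}$ (16 elements) and $\Lambda_{E_7}$ (27 elements) of types $E_6$ and $E_7$. $\mathcal{J}(P)$ is the set of order ideals of $P$. For $x\in P$, $I\in\mathcal{J}(P)$: $\mathbb{1}_x(I)=1$ if $x\in I$, else $0$; $T_x^+(I)=1$ if $x$ is a minimal element of $P\setminus I$, else $0$; $T_x^-(I)=1$ if $x$ is a maximal element of $I$, else $0$; $T_x=T_x^+-T_x^-$. For $f,g\colon\mathcal{J}(P)\to\mathbb{R}$, $f\equiv g$ means $f-g=\sum_{x\in P}c_xT_x$ for some real constants $c_x$; a real number denotes the corresponding constant function. *)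

theory Defs
  imports Complex_Main
begin

definition order_ideals :: "'a set \<Rightarrow> ('a \<Rightarrow> 'a \<Rightarrow> bool) \<Rightarrow> 'a set set" where
  "order_ideals P le = {I. I \<subseteq> P \<and> (\<forall>x\<in>I. \<forall>y\<in>P. le y x \<longrightarrow> y \<in> I)}"

definition ind :: "'a \<Rightarrow> 'a set \<Rightarrow> real" where
  "ind x I = (if x \<in> I then 1 else 0)"

definition Tplus :: "'a set \<Rightarrow> ('a \<Rightarrow> 'a \<Rightarrow> bool) \<Rightarrow> 'a \<Rightarrow> 'a set \<Rightarrow> real" where
  "Tplus P le x I = (if x \<in> P - I \<and> (\<forall>y\<in>P - I. le y x \<longrightarrow> y = x) then 1 else 0)"

definition Tminus :: "'a set \<Rightarrow> ('a \<Rightarrow> 'a \<Rightarrow> bool) \<Rightarrow> 'a \<Rightarrow> 'a set \<Rightarrow> real" where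
  "Tminus P le x I = (if x \<in> I \<and> (\<forall>y\<in>I. le x y \<longrightarrow> y = x) then 1 else 0)"

definition Tog :: "'a set \<Rightarrow> ('a \<Rightarrow> 'a \<Rightarrow> bool) \<Rightarrow> 'a \<Rightarrow> 'a set \<Rightarrow> real" where
  "Tog P le x I = Tplus P le x I - Tminus P le x I"

text \<open>f \<equiv> g on J(P): f - g is a real linear combination of the toggleability statistics T_x.\<close>
definition toggle_equiv :: "'a set \<Rightarrow> ('a \<Rightarrow> 'a \<Rightarrow> bool) \<Rightarrow> ('a set \<Rightarrow> real) \<Rightarrow> ('a set \<Rightarrow> real) \<Rightarrow> bool" where
  "toggle_equiv P le f g \<longleftrightarrow>
     (\<exists>c :: 'a \<Rightarrow> real. \<forall>I \<in> order_ideals P le. f I - g I = (\<Sum>x\<in>P. c x * Tog P le x I))"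

definition order_iso :: "'a set \<Rightarrow> ('a \<Rightarrow> 'a \<Rightarrow> bool) \<Rightarrow> 'b set \<Rightarrow> ('b \<Rightarrow> 'b \<Rightarrow> bool) \<Rightarrow> ('a \<Rightarrow> 'b) \<Rightarrow> bool" where
  "order_iso P le Q le' f \<longleftrightarrow> bij_betw f P Q \<and> (\<forall>x\<in>P. \<forall>y\<in>P. le x y \<longleftrightarrow> le' (f x) (f y))"

definition isomorphic_posets :: "'a set \<Rightarrow> ('a \<Rightarrow> 'a \<Rightarrow> bool) \<Rightarrow> 'b set \<Rightarrow> ('b \<Rightarrow> 'b \<Rightarrow> bool) \<Rightarrow> bool" where
  "isomorphic_posets P le Q le' \<longleftrightarrow> (\<exists>f. order_iso P le Q le' f)"

definition prod_le :: "nat \<times> nat \<Rightarrow> nat \<times> nat \<Rightarrow> bool" where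
  "prod_le p q \<longleftrightarrow> fst p \<le> fst q \<and> snd p \<le> snd q"

definition rect :: "nat \<Rightarrow> nat \<Rightarrow> (nat \<times> nat) set" where
  "rect a b = {(i, j). 1 \<le> i \<and> i \<le> a \<and> 1 \<le> j \<and> j \<le> b}"

definition staircase :: "nat \<Rightarrow> (nat \<times> nat) set" where
  "staircase n = {(i, j). 1 \<le> i \<and> i \<le> j \<and> j \<le> n}"

text \<open>Double-tailed diamond d_n(1): x_i = (0,i), y_j = (1,j), z_k = (2,k).\<close>
definition diamond :: "nat \<Rightarrow> (nat \<times> nat) set" where
  "diamond n = {(0, i) | i. 1 \<le> i \<and> i \<le> n - 1} \<union> {(1, 1), (1, 2)}
              \<union> {(2, k) | k. 1 \<le> k \<and> k \<le> n - 1}"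

definition diamond_le :: "nat \<times> nat \<Rightarrow> nat \<times> nat \<Rightarrow> bool" where
  "diamond_le p q \<longleftrightarrow> fst p < fst q
     \<or> (fst p = 0 \<and> fst q = 0 \<and> snd p \<le> snd q)
     \<or> (fst p = 1 \<and> fst q = 1 \<and> snd p = snd q)
     \<or> (fst p = 2 \<and> fst q = 2 \<and> snd q \<le> snd p)"

text \<open>Exceptional minuscule posets, realized as the positive roots whose coefficient
  at the minuscule node is 1 (Bourbaki labelling; E6: node 1, E7: node 7),
  written in the basis of simple roots and ordered componentwise (root order).\<close>
definition root_le :: "int list \<Rightarrow> int list \<Rightarrow> bool" where
  "root_le xs ys \<longleftrightarrow> list_all2 (\<le>) xs ys"

definition LambdaE6 :: "int list set" where
  "LambdaE6 = {
   [1,0,0,0,0,0],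
   [1,0,1,0,0,0],
   [1,0,1,1,0,0],
   [1,0,1,1,1,0],
   [1,0,1,1,1,1],
   [1,1,1,1,0,0],
   [1,1,1,1,1,0],
   [1,1,1,1,1,1],
   [1,1,1,2,1,0],
   [1,1,1,2,1,1],
   [1,1,1,2,2,1],
   [1,1,2,2,1,0],
   [1,1,2,2,1,1],
   [1,1,2,2,2,1],
   [1,1,2,3,2,1],
   [1,2,2,3,2,1]}"

definition LambdaE7 :: "int list set" where
  "LambdaE7 = {
   [0,0,0,0,0,0,1],
   [0,0,0,0,0,1,1],
   [0,0,0,0,1,1,1],
   [0,0,0,1,1,1,1],
   [0,0,1,1,1,1,1],
   [0,1,0,1,1,1,1],
   [0,1,1,1,1,1,1],
   [0,1,1,2,1,1,1],
   [0,1,1,2,2,1,1],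
   [0,1,1,2,2,2,1],
   [1,0,1,1,1,1,1],
   [1,1,1,1,1,1,1],
   [1,1,1,2,1,1,1],
   [1,1,1,2,2,1,1],
   [1,1,1,2,2,2,1],
   [1,1,2,2,1,1,1],
   [1,1,2,2,2,1,1],
   [1,1,2,2,2,2,1],
   [1,1,2,3,2,1,1],
   [1,1,2,3,2,2,1],
   [1,1,2,3,3,2,1],
   [1,2,2,3,2,1,1],
   [1,2,2,3,2,2,1],
   [1,2,2,3,3,2,1],
   [1,2,2,4,3,2,1],
   [1,2,3,4,3,2,1],
   [2,2,3,4,3,2,1]}"

definition minuscule_poset :: "'a set \<Rightarrow> ('a \<Rightarrow> 'a \<Rightarrow> bool) \<Rightarrow> bool" where
  "minuscule_poset P le \<longleftrightarrow>
     (\<exists>a b. 1 \<le> a \<and> 1 \<le> b \<and> isomorphic_posets P le (rect a b) prod_le)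
   \<or> (\<exists>n. 1 \<le> n \<and> isomorphic_posets P le (staircase n) prod_le)
   \<or> (\<exists>n. 2 \<le> n \<and> isomorphic_posets P le (diamond n) diamond_le)
   \<or> isomorphic_posets P le LambdaE6 root_le
   \<or> isomorphic_posets P le LambdaE7 root_le"

end

theory Submission
  imports Defs
begin

lemma sum_ind_card:
  assumes "finite P" "I \<subseteq> P"
  shows "(\<Sum>p\<in>P. ind p I) = real (card I)"
proof -
  have "(\<Sum>p\<in>P. ind p I) = (\<Sum>p\<in>P. if p \<in> I then 1 else 0)" by (simp add: ind_def)
  also have "\<dots> = real (card (P \<inter> I))" using assms(1) by (simp add: sum.If_cases)
  also have "P \<inter> I = I" using assms(2) by blast
  finally show ?thesis .
qed

lemma order_iso_inv:
  assumes "order_iso P le Q le' f"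
  shows "order_iso Q le' P le (the_inv_into P f)"
proof -
  have b: "bij_betw f P Q" using assms by (simp add: order_iso_def)
  have b2: "bij_betw (the_inv_into P f) Q P" using bij_betw_the_inv_into[OF b] .
  show ?thesis unfolding order_iso_def
  proof (intro conjI b2 ballI)
    fix x y assume "x \<in> Q" "y \<in> Q"
    then obtain a b where ab: "a \<in> P" "b \<in> P" "x = f a" "y = f b" using b by (metis bij_betw_imp_surj_on imageE)
    have "the_inv_into P f x = a" "the_inv_into P f y = b"
      using ab b by (auto intro: the_inv_into_f_f simp: bij_betw_def)
    then show "le' x y = le (the_inv_into P f x) (the_inv_into P f y)"
      using assms ab unfolding order_iso_def by auto
  qed
qed

lemma iso_transfer:
  assumes iso: "order_iso P le Q le' f" and fin: "finite Q"
  and tq: "toggle_equiv Q le' (\<lambda>I. \<Sum>p\<in>Q. ind p I) (\<lambda>I. real (card Q) / 2)"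
  shows "toggle_equiv P le (\<lambda>I. \<Sum>p\<in>P. ind p I) (\<lambda>I. real (card P) / 2)"
proof -
  have b: "bij_betw f P Q" and lei: "\<forall>x\<in>P. \<forall>y\<in>P. le x y \<longleftrightarrow> le' (f x) (f y)"
    using iso by (auto simp: order_iso_def)
  have inj: "inj_on f P" and img: "f ` P = Q" using b by (auto simp: bij_betw_def)
  have finP: "finite P" using fin b bij_betw_finite by blast
  have cardPQ: "card P = card Q" using b bij_betw_same_card by blast
  obtain c' where c': "\<forall>I \<in> order_ideals Q le'. (\<Sum>p\<in>Q. ind p I) - real (card Q) / 2
      = (\<Sum>x\<in>Q. c' x * Tog Q le' x I)" using tq by (auto simp: toggle_equiv_def)
  show ?thesis unfolding toggle_equiv_def
  proof (intro exI ballI)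
    fix I assume I: "I \<in> order_ideals P le"
    have IP: "I \<subseteq> P" using I by (simp add: order_ideals_def)
    have fI: "f ` I \<in> order_ideals Q le'"
      unfolding order_ideals_def
    proof (safe)
      fix a assume "a \<in> I" then show "f a \<in> Q" using IP img by blast
    next
      fix a y assume a: "a \<in> I" and y: "y \<in> Q" and l: "le' y (f a)"
      obtain b where "b \<in> P" "y = f b" using y img by blast
      then have "le b a" using lei l a IP by auto
      then have "b \<in> I" using I a \<open>b \<in> P\<close> by (auto simp: order_ideals_def)
      then show "y \<in> f ` I" using \<open>y = f b\<close> by blast
    qed
    have cI: "card (f ` I) = card I" using inj IP by (meson card_image inj_on_subset)
    have tog: "Tog Q le' (f x) (f ` I) = Tog P le x I" if x: "x \<in> P" for x
    proof -
      have mem: "\<And>z. z \<in> P \<Longrightarrow> (f z \<in> f ` I) = (z \<in> I)" using inj IP by (auto dest: inj_onD)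
      have QI: "Q - f ` I = f ` (P - I)" using inj IP img by (simp add: inj_on_image_set_diff)
      have "Tplus Q le' (f x) (f ` I) = Tplus P le x I"
      proof -
        have "(f x \<in> Q - f ` I \<and> (\<forall>y\<in>Q - f ` I. le' y (f x) \<longrightarrow> y = f x))
             = (x \<in> P - I \<and> (\<forall>y\<in>P - I. le y x \<longrightarrow> y = x))"
          unfolding QI using x mem img lei inj by (auto simp: inj_on_eq_iff)
        then show ?thesis by (simp add: Tplus_def)
      qed
      moreover have "Tminus Q le' (f x) (f ` I) = Tminus P le x I"
      proof -
        have "(f x \<in> f ` I \<and> (\<forall>y\<in>f ` I. le' (f x) y \<longrightarrow> y = f x))
             = (x \<in> I \<and> (\<forall>y\<in>I. le x y \<longrightarrow> y = x))"
          using x mem IP lei inj by (auto simp: inj_on_eq_iff subset_iff)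
        then show ?thesis by (simp add: Tminus_def)
      qed
      ultimately show ?thesis by (simp add: Tog_def)
    qed
    have "(\<Sum>p\<in>P. ind p I) - real (card P) / 2 = (\<Sum>p\<in>Q. ind p (f ` I)) - real (card Q) / 2"
      using sum_ind_card[OF finP IP] sum_ind_card[OF fin] fI cI cardPQ
      by (simp add: order_ideals_def)
    also have "\<dots> = (\<Sum>y\<in>Q. c' y * Tog Q le' y (f ` I))" using c' fI by blast
    also have "\<dots> = (\<Sum>x\<in>P. c' (f x) * Tog Q le' (f x) (f ` I))"
      using sum.reindex[OF inj, of "\<lambda>y. c' y * Tog Q le' y (f ` I)"] img by simp
    also have "\<dots> = (\<Sum>x\<in>P. (c' \<circ> f) x * Tog P le x I)" using tog by simp
    finally show "(\<Sum>p\<in>P. ind p I) - real (card P) / 2 = (\<Sum>x\<in>P. (c' \<circ> f) x * Tog P le x I)" .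
  qed
qed

lemma exists_maximal:
  assumes "finite S" "S \<noteq> {}" "S \<subseteq> P"
  and tr: "\<forall>x\<in>P. \<forall>y\<in>P. \<forall>z\<in>P. le x y \<longrightarrow> le y z \<longrightarrow> le x z"
  and an: "\<forall>x\<in>P. \<forall>y\<in>P. le x y \<longrightarrow> le y x \<longrightarrow> x = y"
  shows "\<exists>x\<in>S. \<forall>z\<in>S. le x z \<longrightarrow> z = x"
  using assms(1,2,3)
proof (induction S rule: finite_ne_induct)
  case (singleton x) then show ?case by auto
next
  case (insert a S)
  then obtain m where m: "m \<in> S" "\<forall>z\<in>S. le m z \<longrightarrow> z = m" by auto
  show ?case
  proof (cases "le m a \<and> a \<noteq> m")
    case True
    have "\<forall>z\<in>insert a S. le a z \<longrightarrow> z = a"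
    proof (intro ballI impI)
      fix z assume z: "z \<in> insert a S" "le a z"
      show "z = a"
      proof (rule ccontr)
        assume "z \<noteq> a"
        then have "z \<in> S" using z by auto
        have "le m z" using tr True z insert.prems m \<open>z \<in> S\<close> by blast
        then have "z = m" using m \<open>z \<in> S\<close> by auto
        then show False using an True z insert.prems m by blast
      qed
    qed
    then show ?thesis by blast
  next
    case False
    then show ?thesis using m by auto
  qed
qed

definition Mx :: "('a \<Rightarrow> 'a \<Rightarrow> bool) \<Rightarrow> 'a set \<Rightarrow> 'a \<Rightarrow> bool" where
  "Mx le I y \<longleftrightarrow> y \<in> I \<and> (\<forall>z\<in>I. le y z \<longrightarrow> z = y)"
definition Ax :: "'a set \<Rightarrow> ('a \<Rightarrow> 'a \<Rightarrow> bool) \<Rightarrow> 'a set \<Rightarrow> 'a \<Rightarrow> bool" where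
  "Ax P le I y \<longleftrightarrow> y \<in> P - I \<and> (\<forall>z\<in>P - I. le z y \<longrightarrow> z = y)"

lemma Tog_eq: "Tog P le y I = (if Ax P le I y then 1 else 0) - (if Mx le I y then 1 else 0)"
  by (simp add: Tog_def Tplus_def Tminus_def Ax_def Mx_def)

lemma ideal_down: "I \<in> order_ideals P le \<Longrightarrow> z \<in> I \<Longrightarrow> y \<in> P \<Longrightarrow> le y z \<Longrightarrow> y \<in> I"
  by (auto simp: order_ideals_def)

lemma ideal_sub: "I \<in> order_ideals P le \<Longrightarrow> I \<subseteq> P"
  by (auto simp: order_ideals_def)

lemma toggle_by_steps:
  fixes c :: "'a \<Rightarrow> real"
  assumes fin: "finite P"
  and tr: "\<forall>x\<in>P. \<forall>y\<in>P. \<forall>z\<in>P. le x y \<longrightarrow> le y z \<longrightarrow> le x z"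
  and an: "\<forall>x\<in>P. \<forall>y\<in>P. le x y \<longrightarrow> le y x \<longrightarrow> x = y"
  and base: "(\<Sum>x\<in>P. c x * Tog P le x {}) = - real (card P) / 2"
  and step: "\<And>I x. I \<in> order_ideals P le \<Longrightarrow> Ax P le I x \<Longrightarrow>
      (\<Sum>y\<in>P. c y * Tog P le y (insert x I)) - (\<Sum>y\<in>P. c y * Tog P le y I) = 1"
  shows "toggle_equiv P le (\<lambda>I. \<Sum>p\<in>P. ind p I) (\<lambda>I. real (card P) / 2)"
proof -
  have main: "\<And>I. I \<in> order_ideals P le \<Longrightarrow> card I = n \<Longrightarrow>
     real (card I) - real (card P) / 2 = (\<Sum>x\<in>P. c x * Tog P le x I)" for n
  proof (induction n)
    case 0
    then have "I = {}" using fin ideal_sub[OF 0(1)] by (meson card_0_eq finite_subset)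
    then show ?case using base by simp
  next
    case (Suc n)
    have IP: "I \<subseteq> P" using ideal_sub[OF Suc.prems(1)] .
    have fI: "finite I" using IP fin finite_subset by blast
    have ne: "I \<noteq> {}" using Suc.prems(2) by auto
    obtain x where x: "x \<in> I" "\<forall>z\<in>I. le x z \<longrightarrow> z = x"
      using exists_maximal[OF fI ne IP tr an] by blast
    define I' where "I' = I - {x}"
    have I'id: "I' \<in> order_ideals P le"
      unfolding order_ideals_def
    proof (safe)
      fix z assume "z \<in> I'" then show "z \<in> P" using IP I'_def by auto
    next
      fix z y assume z: "z \<in> I'" "y \<in> P" "le y z"
      then have "y \<in> I" using ideal_down[OF Suc.prems(1)] I'_def by auto
      moreover have "y \<noteq> x" using x z I'_def by auto
      ultimately show "y \<in> I'" using I'_def by auto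
    qed
    have ax: "Ax P le I' x"
      unfolding Ax_def using x IP ideal_down[OF Suc.prems(1)] I'_def by auto
    have ins: "insert x I' = I" using x I'_def by auto
    have cI': "card I' = n" using Suc.prems(2) x fI I'_def by auto
    have IH: "real (card I') - real (card P) / 2 = (\<Sum>x\<in>P. c x * Tog P le x I')"
      using Suc.IH[OF I'id cI'] .
    have "card I = card I' + 1" using cI' Suc.prems(2) by auto
    then show ?case using step[OF I'id ax] IH ins by simp
  qed
  show ?thesis unfolding toggle_equiv_def
    using main sum_ind_card[OF fin ideal_sub] by (intro exI[of _ c]) auto
qed

lemma Tog_diff:
  assumes I: "I \<in> order_ideals P le" and ax: "Ax P le I x" and y: "y \<in> P"
  shows "Tog P le y (insert x I) - Tog P le y I =
     (if y = x then -2 else 0)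
     + (if y \<noteq> x \<and> le y x \<and> Mx le I y then 1 else 0)
     + (if y \<noteq> x \<and> le x y \<and> Ax P le (insert x I) y then 1 else 0)"
proof -
  have xP: "x \<in> P" "x \<notin> I" and xmin: "\<forall>z\<in>P - I. le z x \<longrightarrow> z = x" using ax by (auto simp: Ax_def)
  show ?thesis
  proof (cases "y = x")
    case True
    have "Mx le (insert x I) x" unfolding Mx_def using ideal_down[OF I] xP by auto
    moreover have "\<not> Ax P le (insert x I) x" by (simp add: Ax_def)
    moreover have "\<not> Mx le I x" using xP by (simp add: Mx_def)
    ultimately show ?thesis using True ax by (simp add: Tog_eq)
  next
    case False
    show ?thesis
    proof (cases "y \<in> I")
      case True
      have "\<not> Ax P le (insert x I) y" "\<not> Ax P le I y" using True by (auto simp: Ax_def)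
      moreover have "Mx le (insert x I) y \<longleftrightarrow> Mx le I y \<and> \<not> le y x"
        using True False by (auto simp: Mx_def)
      moreover have "\<not> (le x y \<and> Ax P le (insert x I) y)" using True by (auto simp: Ax_def)
      ultimately show ?thesis using False by (auto simp: Tog_eq)
    next
      case yI: False
      have "\<not> Mx le (insert x I) y" "\<not> Mx le I y" using yI False by (auto simp: Mx_def)
      moreover have "Ax P le I y \<longleftrightarrow> Ax P le (insert x I) y \<and> \<not> le x y"
        using yI False y xP by (auto simp: Ax_def)
      ultimately show ?thesis using False by (auto simp: Tog_eq)
    qed
  qed
qed

definition Lset :: "'a set \<Rightarrow> ('a \<Rightarrow> 'a \<Rightarrow> bool) \<Rightarrow> 'a set \<Rightarrow> 'a \<Rightarrow> 'a set" where
  "Lset P le I x = {y\<in>P. y \<noteq> x \<and> le y x \<and> Mx le I y}"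
definition Uset :: "'a set \<Rightarrow> ('a \<Rightarrow> 'a \<Rightarrow> bool) \<Rightarrow> 'a set \<Rightarrow> 'a \<Rightarrow> 'a set" where
  "Uset P le I x = {y\<in>P. y \<noteq> x \<and> le x y \<and> Ax P le (insert x I) y}"

lemma step_sum:
  fixes c :: "'a \<Rightarrow> real"
  assumes fin: "finite P" and I: "I \<in> order_ideals P le" and ax: "Ax P le I x"
  shows "(\<Sum>y\<in>P. c y * Tog P le y (insert x I)) - (\<Sum>y\<in>P. c y * Tog P le y I)
     = - 2 * c x + sum c (Lset P le I x) + sum c (Uset P le I x)"
proof -
  have xP: "x \<in> P" using ax by (simp add: Ax_def)
  have "(\<Sum>y\<in>P. c y * Tog P le y (insert x I)) - (\<Sum>y\<in>P. c y * Tog P le y I)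
     = (\<Sum>y\<in>P. c y * (Tog P le y (insert x I) - Tog P le y I))"
    by (simp add: sum_subtractf right_diff_distrib)
  also have "\<dots> = (\<Sum>y\<in>P. (if y = x then -2 * c x else 0) + (if y \<in> Lset P le I x then c y else 0)
        + (if y \<in> Uset P le I x then c y else 0))"
    by (rule sum.cong) (auto simp: Tog_diff[OF I ax] Lset_def Uset_def distrib_left)
  also have "\<dots> = - 2 * c x + sum c (Lset P le I x) + sum c (Uset P le I x)"
  proof -
    have L: "Lset P le I x \<subseteq> P" "Uset P le I x \<subseteq> P" by (auto simp: Lset_def Uset_def)
    have "(\<Sum>y\<in>P. if y \<in> Lset P le I x then c y else 0) = sum c (Lset P le I x)"
      using L fin by (simp add: sum.If_cases Int_absorb1 Int_commute)
    moreover have "(\<Sum>y\<in>P. if y \<in> Uset P le I x then c y else 0) = sum c (Uset P le I x)"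
      using L fin by (simp add: sum.If_cases Int_absorb1 Int_commute)
    ultimately show ?thesis using fin xP by (simp add: sum.distrib)
  qed
  finally show ?thesis .
qed

lemma Lset_cover:
  assumes I: "I \<in> order_ideals P le" and ax: "Ax P le I x" and y: "y \<in> Lset P le I x"
  and z: "z \<in> P" "le y z" "le z x" "z \<noteq> x"
  shows "z = y"
proof -
  have "z \<in> I" using ax z by (auto simp: Ax_def)
  then show ?thesis using y z by (auto simp: Lset_def Mx_def)
qed

lemma Uset_cover:
  assumes I: "I \<in> order_ideals P le" and ax: "Ax P le I x" and y: "y \<in> Uset P le I x"
  and z: "z \<in> P" "le x z" "le z y" "z \<noteq> x"
  shows "z = y"
proof -
  have xP: "x \<in> P" "x \<notin> I" using ax by (auto simp: Ax_def)
  have "z \<notin> I" using ideal_down[OF I _ xP(1) z(2)] xP by auto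
  then show ?thesis using y z by (auto simp: Uset_def Ax_def)
qed

lemma sum_two:
  fixes c :: "'a \<Rightarrow> real"
  assumes "S \<subseteq> {a, b}" "a \<noteq> b"
  shows "sum c S = (if a \<in> S then c a else 0) + (if b \<in> S then c b else 0)"
proof -
  have "S = {} \<or> S = {a} \<or> S = {b} \<or> S = {a, b}" using assms(1) by auto
  then show ?thesis using assms(2) by auto
qed

lemma rect_mem: "(p, q) \<in> rect a b \<longleftrightarrow> 1 \<le> p \<and> p \<le> a \<and> 1 \<le> q \<and> q \<le> b"
  by (simp add: rect_def)

lemma prod_le_simp: "prod_le (p, q) (p', q') \<longleftrightarrow> p \<le> p' \<and> q \<le> q'"
  by (simp add: prod_le_def)

context
  fixes a b i j :: nat and I :: "(nat \<times> nat) set"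
  assumes I: "I \<in> order_ideals (rect a b) prod_le"
  and ax: "Ax (rect a b) prod_le I (i, j)"
begin

lemma R_x: "1 \<le> i" "i \<le> a" "1 \<le> j" "j \<le> b" "(i, j) \<notin> I"
  using ax by (auto simp: Ax_def rect_mem)

lemma R_below: "(p, q) \<in> rect a b \<Longrightarrow> p \<le> i \<Longrightarrow> q \<le> j \<Longrightarrow> (p, q) \<noteq> (i, j) \<Longrightarrow> (p, q) \<in> I"
proof (rule ccontr)
  assume h: "(p, q) \<in> rect a b" "p \<le> i" "q \<le> j" "(p, q) \<noteq> (i, j)" "(p, q) \<notin> I"
  then have "(p, q) \<in> rect a b - I" by auto
  moreover have "prod_le (p, q) (i, j)" using h by (simp add: prod_le_simp)
  ultimately show False using ax h unfolding Ax_def by blast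
qed

lemma R_notabove: "(p, q) \<in> I \<Longrightarrow> i \<le> p \<Longrightarrow> j \<le> q \<Longrightarrow> False"
  using ideal_down[OF I, of "(p, q)" "(i, j)"] R_x by (auto simp: prod_le_simp rect_mem)

lemma R_Lsub: "Lset (rect a b) prod_le I (i, j) \<subseteq> {(i - 1, j), (i, j - 1)}"
proof
  fix y assume y: "y \<in> Lset (rect a b) prod_le I (i, j)"
  obtain p q where pq: "y = (p, q)" by fastforce
  have h: "(p, q) \<in> rect a b" "p \<le> i" "q \<le> j" "(p, q) \<noteq> (i, j)"
    using y pq by (auto simp: Lset_def prod_le_simp)
  have cov: "\<And>z. z \<in> rect a b \<Longrightarrow> prod_le (p, q) z \<Longrightarrow> prod_le z (i, j) \<Longrightarrow> z \<noteq> (i, j) \<Longrightarrow> z = (p, q)"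
    using Lset_cover[OF I ax] y pq by blast
  show "y \<in> {(i - 1, j), (i, j - 1)}"
  proof (rule ccontr)
    assume nn: "y \<notin> {(i - 1, j), (i, j - 1)}"
    show False
    proof (cases "p < i \<and> q < j")
      case True
      then have "(p + 1, q) = (p, q)" using h R_x by (intro cov) (auto simp: rect_mem prod_le_simp)
        then show False by simp
    next
      case False
      then have "(p < i - 1 \<and> q = j) \<or> (p = i \<and> q < j - 1)" using h nn pq by auto
      then show False
      proof
        assume "p < i - 1 \<and> q = j"
        then have "(p + 1, q) = (p, q)" using h R_x by (intro cov) (auto simp: rect_mem prod_le_simp)
        then show False by simp
      next
        assume "p = i \<and> q < j - 1"
        then have "(p, q + 1) = (p, q)" using h R_x by (intro cov) (auto simp: rect_mem prod_le_simp)
        then show False by simp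
      qed
    qed
  qed
qed

lemma R_Usub: "Uset (rect a b) prod_le I (i, j) \<subseteq> {(i + 1, j), (i, j + 1)}"
proof
  fix y assume y: "y \<in> Uset (rect a b) prod_le I (i, j)"
  obtain p q where pq: "y = (p, q)" by fastforce
  have h: "(p, q) \<in> rect a b" "i \<le> p" "j \<le> q" "(p, q) \<noteq> (i, j)"
    using y pq by (auto simp: Uset_def prod_le_simp)
  have cov: "\<And>z. z \<in> rect a b \<Longrightarrow> prod_le (i, j) z \<Longrightarrow> prod_le z (p, q) \<Longrightarrow> z \<noteq> (i, j) \<Longrightarrow> z = (p, q)"
    using Uset_cover[OF I ax] y pq by blast
  show "y \<in> {(i + 1, j), (i, j + 1)}"
  proof (rule ccontr)
    assume nn: "y \<notin> {(i + 1, j), (i, j + 1)}"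
    show False
    proof (cases "i < p \<and> j < q")
      case True
      then have "(i + 1, j) = (p, q)" using h R_x by (intro cov) (auto simp: rect_mem prod_le_simp)
      then show False using True by simp
    next
      case False
      then have "(i + 1 < p \<and> q = j) \<or> (p = i \<and> j + 1 < q)" using h nn pq by auto
      then show False
      proof
        assume A: "i + 1 < p \<and> q = j"
        then have "(i + 1, j) = (p, q)" using h R_x by (intro cov) (auto simp: rect_mem prod_le_simp)
        then show False using A by simp
      next
        assume A: "p = i \<and> j + 1 < q"
        then have "(i, j + 1) = (p, q)" using h R_x by (intro cov) (auto simp: rect_mem prod_le_simp)
        then show False using A by simp
      qed
    qed
  qed
qed

lemma R_L1: "(i - 1, j) \<in> Lset (rect a b) prod_le I (i, j) \<longleftrightarrow> 1 < i \<and> (i - 1, j + 1) \<notin> I"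
proof
  assume "(i - 1, j) \<in> Lset (rect a b) prod_le I (i, j)"
  then show "1 < i \<and> (i - 1, j + 1) \<notin> I"
    by (auto simp: Lset_def Mx_def rect_mem prod_le_simp)
next
  assume h: "1 < i \<and> (i - 1, j + 1) \<notin> I"
  have yP: "(i - 1, j) \<in> rect a b" using h R_x by (auto simp: rect_mem)
  have yI: "(i - 1, j) \<in> I" using R_below[OF yP] h by auto
  have "\<forall>z\<in>I. prod_le (i - 1, j) z \<longrightarrow> z = (i - 1, j)"
  proof (intro ballI impI)
    fix z assume z: "z \<in> I" "prod_le (i - 1, j) z"
    obtain p q where pq: "z = (p, q)" by fastforce
    have zP: "(p, q) \<in> rect a b" using z pq ideal_sub[OF I] by auto
    have jq: "j \<le> q" "i - 1 \<le> p" using z pq by (auto simp: prod_le_simp)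
    have "\<not> i \<le> p" using R_notabove[of p q] z pq jq by blast
    then have "p = i - 1" using jq by arith
    moreover have "q = j"
    proof (rule ccontr)
      assume "q \<noteq> j"
      then have "(i - 1, j + 1) \<in> I"
        using ideal_down[OF I, of z "(i - 1, j + 1)"] z pq zP h \<open>p = i - 1\<close>
        by (auto simp: rect_mem prod_le_simp)
      then show False using h by auto
    qed
    ultimately show "z = (i - 1, j)" using pq by auto
  qed
  then show "(i - 1, j) \<in> Lset (rect a b) prod_le I (i, j)"
    using yP yI h by (auto simp: Lset_def Mx_def prod_le_simp)
qed

lemma R_L2: "(i, j - 1) \<in> Lset (rect a b) prod_le I (i, j) \<longleftrightarrow> 1 < j \<and> (i + 1, j - 1) \<notin> I"
proof
  assume "(i, j - 1) \<in> Lset (rect a b) prod_le I (i, j)"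
  then show "1 < j \<and> (i + 1, j - 1) \<notin> I"
    by (auto simp: Lset_def Mx_def rect_mem prod_le_simp)
next
  assume h: "1 < j \<and> (i + 1, j - 1) \<notin> I"
  have yP: "(i, j - 1) \<in> rect a b" using h R_x by (auto simp: rect_mem)
  have yI: "(i, j - 1) \<in> I" using R_below[OF yP] h by auto
  have "\<forall>z\<in>I. prod_le (i, j - 1) z \<longrightarrow> z = (i, j - 1)"
  proof (intro ballI impI)
    fix z assume z: "z \<in> I" "prod_le (i, j - 1) z"
    obtain p q where pq: "z = (p, q)" by fastforce
    have zP: "(p, q) \<in> rect a b" using z pq ideal_sub[OF I] by auto
    have jq: "i \<le> p" "j - 1 \<le> q" using z pq by (auto simp: prod_le_simp)
    have "\<not> j \<le> q" using R_notabove[of p q] z pq jq by blast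
    then have "q = j - 1" using jq by arith
    moreover have "p = i"
    proof (rule ccontr)
      assume "p \<noteq> i"
      then have "(i + 1, j - 1) \<in> I"
        using ideal_down[OF I, of z "(i + 1, j - 1)"] z pq zP h \<open>q = j - 1\<close>
        by (auto simp: rect_mem prod_le_simp)
      then show False using h by auto
    qed
    ultimately show "z = (i, j - 1)" using pq by auto
  qed
  then show "(i, j - 1) \<in> Lset (rect a b) prod_le I (i, j)"
    using yP yI h by (auto simp: Lset_def Mx_def prod_le_simp)
qed

lemma R_U1: "(i, j + 1) \<in> Uset (rect a b) prod_le I (i, j) \<longleftrightarrow> j < b \<and> (i = 1 \<or> (i - 1, j + 1) \<in> I)"
proof
  assume h: "(i, j + 1) \<in> Uset (rect a b) prod_le I (i, j)"
  then have jb: "j < b" by (auto simp: Uset_def rect_mem)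
  show "j < b \<and> (i = 1 \<or> (i - 1, j + 1) \<in> I)"
  proof (rule ccontr)
    assume "\<not> ?thesis"
    then have n: "i \<noteq> 1" "(i - 1, j + 1) \<notin> I" using jb by auto
    have "(i - 1, j + 1) \<in> rect a b - insert (i, j) I" using n R_x jb by (auto simp: rect_mem)
    moreover have "prod_le (i - 1, j + 1) (i, j + 1)" by (simp add: prod_le_simp)
    ultimately have "(i - 1, j + 1) = (i, j + 1)" using h by (auto simp: Uset_def Ax_def)
    then show False using n R_x by auto
  qed
next
  assume h: "j < b \<and> (i = 1 \<or> (i - 1, j + 1) \<in> I)"
  have yP: "(i, j + 1) \<in> rect a b" using h R_x by (auto simp: rect_mem)
  have yI: "(i, j + 1) \<notin> I" using R_notabove[of i "j+1"] by auto
  have "\<forall>z\<in>rect a b - insert (i, j) I. prod_le z (i, j + 1) \<longrightarrow> z = (i, j + 1)"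
  proof (intro ballI impI)
    fix z assume z: "z \<in> rect a b - insert (i, j) I" "prod_le z (i, j + 1)"
    obtain p q where pq: "z = (p, q)" by fastforce
    have "q = j + 1"
    proof (rule ccontr)
      assume "q \<noteq> j + 1"
      then show False using R_below[of p q] z pq by (auto simp: prod_le_simp)
    qed
    moreover have "p = i"
    proof (rule ccontr)
      assume "p \<noteq> i"
      then have "p < i" "1 \<le> p" using z pq by (auto simp: prod_le_simp rect_mem)
      have "prod_le z (i - 1, j + 1)" using pq \<open>p < i\<close> \<open>q = j + 1\<close> by (simp add: prod_le_simp)
      then have "z \<in> I" using h ideal_down[OF I, of "(i - 1, j + 1)" z] z \<open>p < i\<close> \<open>1 \<le> p\<close> by auto
      then show False using z by auto
    qed
    ultimately show "z = (i, j + 1)" using pq by auto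
  qed
  then show "(i, j + 1) \<in> Uset (rect a b) prod_le I (i, j)"
    using yP yI by (auto simp: Uset_def Ax_def prod_le_simp)
qed

lemma R_U2: "(i + 1, j) \<in> Uset (rect a b) prod_le I (i, j) \<longleftrightarrow> i < a \<and> (j = 1 \<or> (i + 1, j - 1) \<in> I)"
proof
  assume h: "(i + 1, j) \<in> Uset (rect a b) prod_le I (i, j)"
  then have ia: "i < a" by (auto simp: Uset_def rect_mem)
  show "i < a \<and> (j = 1 \<or> (i + 1, j - 1) \<in> I)"
  proof (rule ccontr)
    assume "\<not> ?thesis"
    then have n: "j \<noteq> 1" "(i + 1, j - 1) \<notin> I" using ia by auto
    have "(i + 1, j - 1) \<in> rect a b - insert (i, j) I" using n R_x ia by (auto simp: rect_mem)
    moreover have "prod_le (i + 1, j - 1) (i + 1, j)" by (simp add: prod_le_simp)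
    ultimately have "(i + 1, j - 1) = (i + 1, j)" using h by (auto simp: Uset_def Ax_def)
    then show False using n R_x by auto
  qed
next
  assume h: "i < a \<and> (j = 1 \<or> (i + 1, j - 1) \<in> I)"
  have yP: "(i + 1, j) \<in> rect a b" using h R_x by (auto simp: rect_mem)
  have yI: "(i + 1, j) \<notin> I" using R_notabove[of "i+1" j] by auto
  have "\<forall>z\<in>rect a b - insert (i, j) I. prod_le z (i + 1, j) \<longrightarrow> z = (i + 1, j)"
  proof (intro ballI impI)
    fix z assume z: "z \<in> rect a b - insert (i, j) I" "prod_le z (i + 1, j)"
    obtain p q where pq: "z = (p, q)" by fastforce
    have "p = i + 1"
    proof (rule ccontr)
      assume "p \<noteq> i + 1"
      then show False using R_below[of p q] z pq by (auto simp: prod_le_simp)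
    qed
    moreover have "q = j"
    proof (rule ccontr)
      assume "q \<noteq> j"
      then have "q < j" "1 \<le> q" using z pq by (auto simp: prod_le_simp rect_mem)
      have "prod_le z (i + 1, j - 1)" using pq \<open>q < j\<close> \<open>p = i + 1\<close> by (simp add: prod_le_simp)
      then have "z \<in> I" using h ideal_down[OF I, of "(i + 1, j - 1)" z] z \<open>q < j\<close> \<open>1 \<le> q\<close> by auto
      then show False using z by auto
    qed
    ultimately show "z = (i + 1, j)" using pq by auto
  qed
  then show "(i + 1, j) \<in> Uset (rect a b) prod_le I (i, j)"
    using yP yI by (auto simp: Uset_def Ax_def prod_le_simp)
qed

end

definition crect :: "nat \<Rightarrow> nat \<Rightarrow> nat \<times> nat \<Rightarrow> real" where
  "crect a b y = (real (fst y) - real (snd y) + real b) * (real (fst y) - real (snd y) - real a) / 2"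

lemma rect_step:
  assumes I: "I \<in> order_ideals (rect a b) prod_le" and ax: "Ax (rect a b) prod_le I x"
  shows "- 2 * crect a b x + sum (crect a b) (Lset (rect a b) prod_le I x)
          + sum (crect a b) (Uset (rect a b) prod_le I x) = 1"
proof -
  obtain i j where x: "x = (i, j)" by fastforce
  note ax' = ax[unfolded x]
  note X = R_x[OF I ax']
  have d1: "(i - 1, j) \<noteq> (i, j - 1)" using X by auto
  have d2: "(i + 1, j) \<noteq> (i, j + 1)" by auto
  have L: "sum (crect a b) (Lset (rect a b) prod_le I x) =
     (if 1 < i \<and> (i - 1, j + 1) \<notin> I then crect a b (i - 1, j) else 0)
   + (if 1 < j \<and> (i + 1, j - 1) \<notin> I then crect a b (i, j - 1) else 0)"
    unfolding x sum_two[OF R_Lsub[OF I ax'] d1] R_L1[OF I ax'] R_L2[OF I ax'] ..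
  have U: "sum (crect a b) (Uset (rect a b) prod_le I x) =
     (if i < a \<and> (j = 1 \<or> (i + 1, j - 1) \<in> I) then crect a b (i + 1, j) else 0)
   + (if j < b \<and> (i = 1 \<or> (i - 1, j + 1) \<in> I) then crect a b (i, j + 1) else 0)"
    unfolding x sum_two[OF R_Usub[OF I ax'] d2] R_U1[OF I ax'] R_U2[OF I ax'] ..
  have w1: "j = b \<Longrightarrow> (i - 1, j + 1) \<notin> I" using ideal_sub[OF I] by (auto simp: rect_mem)
  have w2: "i = a \<Longrightarrow> (i + 1, j - 1) \<notin> I" using ideal_sub[OF I] by (auto simp: rect_mem)
  define u where "u = real i - real j"
  have c1: "crect a b (i - 1, j) = (u - 1 + real b) * (u - 1 - real a) / 2"
    using X by (simp add: crect_def of_nat_diff u_def algebra_simps)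
  have c2: "crect a b (i, j + 1) = (u - 1 + real b) * (u - 1 - real a) / 2"
    using X by (simp add: crect_def u_def algebra_simps)
  have c3: "crect a b (i, j - 1) = (u + 1 + real b) * (u + 1 - real a) / 2"
    using X by (simp add: crect_def of_nat_diff u_def algebra_simps)
  have c4: "crect a b (i + 1, j) = (u + 1 + real b) * (u + 1 - real a) / 2"
    using X by (simp add: crect_def u_def algebra_simps)
  have c0: "crect a b (i, j) = (u + real b) * (u - real a) / 2"
    by (simp add: crect_def u_def)
  have z1: "i = 1 \<Longrightarrow> j = b \<Longrightarrow> (u - 1 + real b) = 0" using X by (simp add: u_def)
  have z2: "i = a \<Longrightarrow> j = 1 \<Longrightarrow> (u + 1 - real a) = 0" using X by (simp add: u_def)
  have A: "(if 1 < i \<and> (i - 1, j + 1) \<notin> I then crect a b (i - 1, j) else 0)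
        + (if j < b \<and> (i = 1 \<or> (i - 1, j + 1) \<in> I) then crect a b (i, j + 1) else 0)
        = (u - 1 + real b) * (u - 1 - real a) / 2"
    unfolding c1 c2 using X w1 z1 by (cases "i = 1"; cases "j = b") auto
  have B: "(if 1 < j \<and> (i + 1, j - 1) \<notin> I then crect a b (i, j - 1) else 0)
        + (if i < a \<and> (j = 1 \<or> (i + 1, j - 1) \<in> I) then crect a b (i + 1, j) else 0)
        = (u + 1 + real b) * (u + 1 - real a) / 2"
    unfolding c3 c4 using X w2 z2 by (cases "j = 1"; cases "i = a") auto
  have key: "- 2 * crect a b (i, j) + (u - 1 + real b) * (u - 1 - real a) / 2
      + (u + 1 + real b) * (u + 1 - real a) / 2 = 1"
    unfolding c0 by (simp add: field_simps)
  show ?thesis using L U A B key unfolding x by linarith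
qed


lemma rect_eq: "rect a b = {1..a} \<times> {1..b}"
  by (auto simp: rect_def)

lemma rect_result:
  assumes "1 \<le> a" "1 \<le> b"
  shows "toggle_equiv (rect a b) prod_le (\<lambda>I. \<Sum>p\<in>rect a b. ind p I) (\<lambda>I. real (card (rect a b)) / 2)"
proof (rule toggle_by_steps[where c = "crect a b"])
  show fin: "finite (rect a b)" by (simp add: rect_eq)
  show "\<forall>x\<in>rect a b. \<forall>y\<in>rect a b. \<forall>z\<in>rect a b. prod_le x y \<longrightarrow> prod_le y z \<longrightarrow> prod_le x z"
    by (auto simp: prod_le_def)
  show "\<forall>x\<in>rect a b. \<forall>y\<in>rect a b. prod_le x y \<longrightarrow> prod_le y x \<longrightarrow> x = y"
    by (auto simp: prod_le_def)
  have t: "Tog (rect a b) prod_le y {} = (if y = (1, 1) then 1 else 0)" if y: "y \<in> rect a b" for y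
  proof -
    obtain p q where pq: "y = (p, q)" by fastforce
    have "Ax (rect a b) prod_le {} y \<longleftrightarrow> y = (1, 1)"
    proof
      assume h: "Ax (rect a b) prod_le {} y"
      have "(1, 1) \<in> rect a b" using assms by (simp add: rect_mem)
      moreover have "prod_le (1, 1) y" using y pq by (simp add: rect_mem prod_le_simp)
      ultimately show "y = (1, 1)" using h by (auto simp: Ax_def)
    next
      assume "y = (1, 1)"
      then show "Ax (rect a b) prod_le {} y" using y
        by (auto simp: Ax_def prod_le_def rect_def)
    qed
    then show ?thesis by (simp add: Tog_eq Mx_def)
  qed
  have "(\<Sum>x\<in>rect a b. crect a b x * Tog (rect a b) prod_le x {})
      = (\<Sum>x\<in>rect a b. if x = (1, 1) then crect a b x else 0)"
    by (rule sum.cong) (auto simp: t)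
  also have "\<dots> = crect a b (1, 1)" using fin assms by (simp add: rect_mem)
  also have "\<dots> = - real (card (rect a b)) / 2" by (simp add: crect_def rect_eq)
  finally show "(\<Sum>x\<in>rect a b. crect a b x * Tog (rect a b) prod_le x {}) = - real (card (rect a b)) / 2" .
  fix I x assume I: "I \<in> order_ideals (rect a b) prod_le" and ax: "Ax (rect a b) prod_le I x"
  show "(\<Sum>y\<in>rect a b. crect a b y * Tog (rect a b) prod_le y (insert x I))
      - (\<Sum>y\<in>rect a b. crect a b y * Tog (rect a b) prod_le y I) = 1"
    using step_sum[OF fin I ax] rect_step[OF I ax] by simp
qed

lemma st_mem: "(p, q) \<in> staircase n \<longleftrightarrow> 1 \<le> p \<and> p \<le> q \<and> q \<le> n"
  by (simp add: staircase_def)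

context
  fixes n i j :: nat and I :: "(nat \<times> nat) set"
  assumes I: "I \<in> order_ideals (staircase n) prod_le"
  and ax: "Ax (staircase n) prod_le I (i, j)"
begin

lemma S_x: "1 \<le> i" "i \<le> j" "j \<le> n" "(i, j) \<notin> I"
  using ax by (auto simp: Ax_def st_mem)

lemma S_below: "(p, q) \<in> staircase n \<Longrightarrow> p \<le> i \<Longrightarrow> q \<le> j \<Longrightarrow> (p, q) \<noteq> (i, j) \<Longrightarrow> (p, q) \<in> I"
proof (rule ccontr)
  assume h: "(p, q) \<in> staircase n" "p \<le> i" "q \<le> j" "(p, q) \<noteq> (i, j)" "(p, q) \<notin> I"
  then have "(p, q) \<in> staircase n - I" by auto
  moreover have "prod_le (p, q) (i, j)" using h by (simp add: prod_le_simp)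
  ultimately show False using ax h unfolding Ax_def by blast
qed

lemma S_notabove: "(p, q) \<in> I \<Longrightarrow> i \<le> p \<Longrightarrow> j \<le> q \<Longrightarrow> False"
  using ideal_down[OF I, of "(p, q)" "(i, j)"] S_x by (auto simp: prod_le_simp st_mem)

lemma S_Lsub: "Lset (staircase n) prod_le I (i, j) \<subseteq> {(i - 1, j), (i, j - 1)}"
proof
  fix y assume y: "y \<in> Lset (staircase n) prod_le I (i, j)"
  obtain p q where pq: "y = (p, q)" by fastforce
  have h: "(p, q) \<in> staircase n" "p \<le> i" "q \<le> j" "(p, q) \<noteq> (i, j)"
    using y pq by (auto simp: Lset_def prod_le_simp)
  have cov: "\<And>z. z \<in> staircase n \<Longrightarrow> prod_le (p, q) z \<Longrightarrow> prod_le z (i, j) \<Longrightarrow> z \<noteq> (i, j) \<Longrightarrow> z = (p, q)"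
    using Lset_cover[OF I ax] y pq by blast
  show "y \<in> {(i - 1, j), (i, j - 1)}"
  proof (rule ccontr)
    assume nn: "y \<notin> {(i - 1, j), (i, j - 1)}"
    show False
    proof (cases "p < i \<and> q < j")
      case True
      then have "(p, q + 1) = (p, q)" using h S_x by (intro cov) (auto simp: st_mem prod_le_simp)
      then show False by simp
    next
      case False
      then have "(p < i - 1 \<and> q = j) \<or> (p = i \<and> q < j - 1)" using h nn pq by auto
      then show False
      proof
        assume A: "p < i - 1 \<and> q = j"
        then have "(p + 1, q) = (p, q)" using h S_x by (intro cov) (auto simp: st_mem prod_le_simp)
        then show False by simp
      next
        assume A: "p = i \<and> q < j - 1"
        then have "(p, q + 1) = (p, q)" using h S_x by (intro cov) (auto simp: st_mem prod_le_simp)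
        then show False by simp
      qed
    qed
  qed
qed

lemma S_Usub: "Uset (staircase n) prod_le I (i, j) \<subseteq> {(i + 1, j), (i, j + 1)}"
proof
  fix y assume y: "y \<in> Uset (staircase n) prod_le I (i, j)"
  obtain p q where pq: "y = (p, q)" by fastforce
  have h: "(p, q) \<in> staircase n" "i \<le> p" "j \<le> q" "(p, q) \<noteq> (i, j)"
    using y pq by (auto simp: Uset_def prod_le_simp)
  have cov: "\<And>z. z \<in> staircase n \<Longrightarrow> prod_le (i, j) z \<Longrightarrow> prod_le z (p, q) \<Longrightarrow> z \<noteq> (i, j) \<Longrightarrow> z = (p, q)"
    using Uset_cover[OF I ax] y pq by blast
  show "y \<in> {(i + 1, j), (i, j + 1)}"
  proof (rule ccontr)
    assume nn: "y \<notin> {(i + 1, j), (i, j + 1)}"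
    show False
    proof (cases "i < p \<and> j < q")
      case True
      then have "(i, j + 1) = (p, q)" using h S_x by (intro cov) (auto simp: st_mem prod_le_simp)
      then show False using True by simp
    next
      case False
      then have "(i + 1 < p \<and> q = j) \<or> (p = i \<and> j + 1 < q)" using h nn pq by auto
      then show False
      proof
        assume A: "i + 1 < p \<and> q = j"
        then have "(i + 1, j) = (p, q)" using h S_x by (intro cov) (auto simp: st_mem prod_le_simp)
        then show False using A by simp
      next
        assume A: "p = i \<and> j + 1 < q"
        then have "(i, j + 1) = (p, q)" using h S_x by (intro cov) (auto simp: st_mem prod_le_simp)
        then show False using A by simp
      qed
    qed
  qed
qed

lemma S_L1: "(i - 1, j) \<in> Lset (staircase n) prod_le I (i, j) \<longleftrightarrow> 1 < i \<and> (i - 1, j + 1) \<notin> I"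
proof
  assume "(i - 1, j) \<in> Lset (staircase n) prod_le I (i, j)"
  then show "1 < i \<and> (i - 1, j + 1) \<notin> I"
    by (auto simp: Lset_def Mx_def st_mem prod_le_simp)
next
  assume h: "1 < i \<and> (i - 1, j + 1) \<notin> I"
  have yP: "(i - 1, j) \<in> staircase n" using h S_x by (auto simp: st_mem)
  have yI: "(i - 1, j) \<in> I" using S_below[OF yP] h by auto
  have "\<forall>z\<in>I. prod_le (i - 1, j) z \<longrightarrow> z = (i - 1, j)"
  proof (intro ballI impI)
    fix z assume z: "z \<in> I" "prod_le (i - 1, j) z"
    obtain p q where pq: "z = (p, q)" by fastforce
    have zP: "(p, q) \<in> staircase n" using z pq ideal_sub[OF I] by auto
    have jq: "j \<le> q" "i - 1 \<le> p" using z pq by (auto simp: prod_le_simp)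
    have "\<not> i \<le> p" using S_notabove[of p q] z pq jq by blast
    then have "p = i - 1" using jq by arith
    moreover have "q = j"
    proof (rule ccontr)
      assume "q \<noteq> j"
      then have "(i - 1, j + 1) \<in> I"
        using ideal_down[OF I, of z "(i - 1, j + 1)"] z pq zP h \<open>p = i - 1\<close> S_x
        by (auto simp: st_mem prod_le_simp)
      then show False using h by auto
    qed
    ultimately show "z = (i - 1, j)" using pq by auto
  qed
  then show "(i - 1, j) \<in> Lset (staircase n) prod_le I (i, j)"
    using yP yI h by (auto simp: Lset_def Mx_def prod_le_simp)
qed

lemma S_L2: "(i, j - 1) \<in> Lset (staircase n) prod_le I (i, j) \<longleftrightarrow> i < j \<and> (i + 1, j - 1) \<notin> I"
proof
  assume "(i, j - 1) \<in> Lset (staircase n) prod_le I (i, j)"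
  then show "i < j \<and> (i + 1, j - 1) \<notin> I"
    by (auto simp: Lset_def Mx_def st_mem prod_le_simp)
next
  assume h: "i < j \<and> (i + 1, j - 1) \<notin> I"
  have yP: "(i, j - 1) \<in> staircase n" using h S_x by (auto simp: st_mem)
  have yI: "(i, j - 1) \<in> I" using S_below[OF yP] h by auto
  have "\<forall>z\<in>I. prod_le (i, j - 1) z \<longrightarrow> z = (i, j - 1)"
  proof (intro ballI impI)
    fix z assume z: "z \<in> I" "prod_le (i, j - 1) z"
    obtain p q where pq: "z = (p, q)" by fastforce
    have zP: "(p, q) \<in> staircase n" using z pq ideal_sub[OF I] by auto
    have jq: "i \<le> p" "j - 1 \<le> q" using z pq by (auto simp: prod_le_simp)
    have "\<not> j \<le> q" using S_notabove[of p q] z pq jq by blast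
    then have "q = j - 1" using jq by arith
    moreover have "p = i"
    proof (rule ccontr)
      assume "p \<noteq> i"
      then have "(i + 1, j - 1) \<in> I"
        using ideal_down[OF I, of z "(i + 1, j - 1)"] z pq zP h \<open>q = j - 1\<close> jq
        by (auto simp: st_mem prod_le_simp)
      then show False using h by auto
    qed
    ultimately show "z = (i, j - 1)" using pq by auto
  qed
  then show "(i, j - 1) \<in> Lset (staircase n) prod_le I (i, j)"
    using yP yI h by (auto simp: Lset_def Mx_def prod_le_simp)
qed

lemma S_U1: "(i, j + 1) \<in> Uset (staircase n) prod_le I (i, j) \<longleftrightarrow> j < n \<and> (i = 1 \<or> (i - 1, j + 1) \<in> I)"
proof
  assume h: "(i, j + 1) \<in> Uset (staircase n) prod_le I (i, j)"
  then have jb: "j < n" by (auto simp: Uset_def st_mem)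
  show "j < n \<and> (i = 1 \<or> (i - 1, j + 1) \<in> I)"
  proof (rule ccontr)
    assume "\<not> ?thesis"
    then have nn: "i \<noteq> 1" "(i - 1, j + 1) \<notin> I" using jb by auto
    have "(i - 1, j + 1) \<in> staircase n - insert (i, j) I" using nn S_x jb by (auto simp: st_mem)
    moreover have "prod_le (i - 1, j + 1) (i, j + 1)" by (simp add: prod_le_simp)
    ultimately have "(i - 1, j + 1) = (i, j + 1)" using h by (auto simp: Uset_def Ax_def)
    then show False using nn S_x by auto
  qed
next
  assume h: "j < n \<and> (i = 1 \<or> (i - 1, j + 1) \<in> I)"
  have yP: "(i, j + 1) \<in> staircase n" using h S_x by (auto simp: st_mem)
  have yI: "(i, j + 1) \<notin> I" using S_notabove[of i "j+1"] by auto
  have "\<forall>z\<in>staircase n - insert (i, j) I. prod_le z (i, j + 1) \<longrightarrow> z = (i, j + 1)"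
  proof (intro ballI impI)
    fix z assume z: "z \<in> staircase n - insert (i, j) I" "prod_le z (i, j + 1)"
    obtain p q where pq: "z = (p, q)" by fastforce
    have "q = j + 1"
    proof (rule ccontr)
      assume "q \<noteq> j + 1"
      then show False using S_below[of p q] z pq by (auto simp: prod_le_simp)
    qed
    moreover have "p = i"
    proof (rule ccontr)
      assume "p \<noteq> i"
      then have "p < i" "1 \<le> p" using z pq by (auto simp: prod_le_simp st_mem)
      have "prod_le z (i - 1, j + 1)" using pq \<open>p < i\<close> \<open>q = j + 1\<close> by (simp add: prod_le_simp)
      then have "z \<in> I" using h ideal_down[OF I, of "(i - 1, j + 1)" z] z \<open>p < i\<close> \<open>1 \<le> p\<close> by auto
      then show False using z by auto
    qed
    ultimately show "z = (i, j + 1)" using pq by auto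
  qed
  then show "(i, j + 1) \<in> Uset (staircase n) prod_le I (i, j)"
    using yP yI by (auto simp: Uset_def Ax_def prod_le_simp)
qed

lemma S_U2: "(i + 1, j) \<in> Uset (staircase n) prod_le I (i, j) \<longleftrightarrow> i < j \<and> (j = i + 1 \<or> (i + 1, j - 1) \<in> I)"
proof
  assume h: "(i + 1, j) \<in> Uset (staircase n) prod_le I (i, j)"
  then have ia: "i < j" by (auto simp: Uset_def st_mem)
  show "i < j \<and> (j = i + 1 \<or> (i + 1, j - 1) \<in> I)"
  proof (rule ccontr)
    assume "\<not> ?thesis"
    then have nn: "j \<noteq> i + 1" "(i + 1, j - 1) \<notin> I" using ia by auto
    have "(i + 1, j - 1) \<in> staircase n - insert (i, j) I" using nn S_x ia by (auto simp: st_mem)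
    moreover have "prod_le (i + 1, j - 1) (i + 1, j)" by (simp add: prod_le_simp)
    ultimately have "(i + 1, j - 1) = (i + 1, j)" using h by (auto simp: Uset_def Ax_def)
    then show False using nn S_x ia by auto
  qed
next
  assume h: "i < j \<and> (j = i + 1 \<or> (i + 1, j - 1) \<in> I)"
  have yP: "(i + 1, j) \<in> staircase n" using h S_x by (auto simp: st_mem)
  have yI: "(i + 1, j) \<notin> I" using S_notabove[of "i+1" j] by auto
  have "\<forall>z\<in>staircase n - insert (i, j) I. prod_le z (i + 1, j) \<longrightarrow> z = (i + 1, j)"
  proof (intro ballI impI)
    fix z assume z: "z \<in> staircase n - insert (i, j) I" "prod_le z (i + 1, j)"
    obtain p q where pq: "z = (p, q)" by fastforce
    have "p = i + 1"
    proof (rule ccontr)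
      assume "p \<noteq> i + 1"
      then show False using S_below[of p q] z pq by (auto simp: prod_le_simp)
    qed
    moreover have "q = j"
    proof (rule ccontr)
      assume "q \<noteq> j"
      then have "q < j" "i + 1 \<le> q" using z pq \<open>p = i + 1\<close> by (auto simp: prod_le_simp st_mem)
      then have "(i + 1, j - 1) \<in> I" using h by auto
      have "prod_le z (i + 1, j - 1)" using pq \<open>q < j\<close> \<open>p = i + 1\<close> by (simp add: prod_le_simp)
      then have "z \<in> I" using ideal_down[OF I, of "(i + 1, j - 1)" z] z \<open>(i + 1, j - 1) \<in> I\<close> by auto
      then show False using z by auto
    qed
    ultimately show "z = (i + 1, j)" using pq by auto
  qed
  then show "(i + 1, j) \<in> Uset (staircase n) prod_le I (i, j)"
    using yP yI by (auto simp: Uset_def Ax_def prod_le_simp)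
qed

end

definition cst :: "nat \<Rightarrow> nat \<times> nat \<Rightarrow> real" where
  "cst n y = (if fst y = snd y then - (real n * (real n + 1) / 4)
     else (real (snd y) - real (fst y)) * (real (snd y) - real (fst y) + 1) / 2 - real n * (real n + 1) / 2)"

lemma st_step:
  assumes I: "I \<in> order_ideals (staircase n) prod_le" and ax: "Ax (staircase n) prod_le I x"
  shows "- 2 * cst n x + sum (cst n) (Lset (staircase n) prod_le I x)
          + sum (cst n) (Uset (staircase n) prod_le I x) = 1"
proof -
  obtain i j where x: "x = (i, j)" by fastforce
  note ax' = ax[unfolded x]
  note X = S_x[OF I ax']
  have d1: "(i - 1, j) \<noteq> (i, j - 1)" using X by auto
  have d2: "(i + 1, j) \<noteq> (i, j + 1)" by auto
  have L: "sum (cst n) (Lset (staircase n) prod_le I x) =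
     (if 1 < i \<and> (i - 1, j + 1) \<notin> I then cst n (i - 1, j) else 0)
   + (if i < j \<and> (i + 1, j - 1) \<notin> I then cst n (i, j - 1) else 0)"
    unfolding x sum_two[OF S_Lsub[OF I ax'] d1] S_L1[OF I ax'] S_L2[OF I ax'] ..
  have U: "sum (cst n) (Uset (staircase n) prod_le I x) =
     (if i < j \<and> (j = i + 1 \<or> (i + 1, j - 1) \<in> I) then cst n (i + 1, j) else 0)
   + (if j < n \<and> (i = 1 \<or> (i - 1, j + 1) \<in> I) then cst n (i, j + 1) else 0)"
    unfolding x sum_two[OF S_Usub[OF I ax'] d2] S_U1[OF I ax'] S_U2[OF I ax'] ..
  have w1: "j = n \<Longrightarrow> (i - 1, j + 1) \<notin> I" using ideal_sub[OF I] by (auto simp: st_mem)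
  have w2: "j = i + 1 \<Longrightarrow> (i + 1, j - 1) \<notin> I" using ideal_sub[OF I] by (auto simp: st_mem)
  define k where "k = real j - real i"
  define N where "N = real n * (real n + 1) / 2"
  have ne1: "i - 1 \<noteq> j" using X by arith
  have r1: "real (i - 1) = real i - 1" using X by (simp add: of_nat_diff)
  have c1: "cst n (i - 1, j) = (k + 1) * (k + 2) / 2 - N"
    using ne1 r1 by (simp add: cst_def k_def N_def field_simps)
  have c2: "cst n (i, j + 1) = (k + 1) * (k + 2) / 2 - N"
    using X by (simp add: cst_def k_def N_def algebra_simps)
  have z1: "i = 1 \<Longrightarrow> j = n \<Longrightarrow> (k + 1) * (k + 2) / 2 - N = 0" using X
    by (simp add: k_def N_def of_nat_diff field_simps)
  have A: "(if 1 < i \<and> (i - 1, j + 1) \<notin> I then cst n (i - 1, j) else 0)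
        + (if j < n \<and> (i = 1 \<or> (i - 1, j + 1) \<in> I) then cst n (i, j + 1) else 0)
        = (k + 1) * (k + 2) / 2 - N"
    unfolding c1 c2 using X w1 z1 by (cases "i = 1"; cases "j = n") auto
  show ?thesis
  proof (cases "i = j")
    case True
    have B: "(if i < j \<and> (i + 1, j - 1) \<notin> I then cst n (i, j - 1) else 0)
       + (if i < j \<and> (j = i + 1 \<or> (i + 1, j - 1) \<in> I) then cst n (i + 1, j) else 0) = 0"
      using True by simp
    have c0: "cst n (i, j) = - N / 2" using True by (simp add: cst_def N_def)
    have key: "- 2 * cst n (i, j) + ((k + 1) * (k + 2) / 2 - N) = 1"
      using True unfolding c0 by (simp add: k_def)
    show ?thesis using L U A B key unfolding x by linarith
  next
    case ne: False
    show ?thesis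
    proof (cases "j = i + 1")
      case True
      have c3: "cst n (i, j - 1) = - N / 2" "cst n (i + 1, j) = - N / 2"
        using True by (simp_all add: cst_def N_def)
      have B: "(if i < j \<and> (i + 1, j - 1) \<notin> I then cst n (i, j - 1) else 0)
       + (if i < j \<and> (j = i + 1 \<or> (i + 1, j - 1) \<in> I) then cst n (i + 1, j) else 0) = - N"
        using True w2 c3 by simp
      have c0: "cst n (i, j) = 1 - N" using True by (simp add: cst_def N_def)
      have key: "- 2 * cst n (i, j) + ((k + 1) * (k + 2) / 2 - N) - N = 1"
        using True unfolding c0 by (simp add: k_def)
      show ?thesis using L U A B key unfolding x by linarith
    next
      case False
      have gt: "i + 1 < j" using False ne X by auto
      have ne3: "i \<noteq> j - 1" "i + 1 \<noteq> j" using gt by arith+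
      have r3: "real (j - 1) = real j - 1" using gt by (simp add: of_nat_diff)
      have c3: "cst n (i, j - 1) = (k - 1) * k / 2 - N" "cst n (i + 1, j) = (k - 1) * k / 2 - N"
        using ne3 r3 by (simp_all add: cst_def N_def k_def field_simps)
      have B: "(if i < j \<and> (i + 1, j - 1) \<notin> I then cst n (i, j - 1) else 0)
       + (if i < j \<and> (j = i + 1 \<or> (i + 1, j - 1) \<in> I) then cst n (i + 1, j) else 0) = (k - 1) * k / 2 - N"
        using gt c3 by auto
      have c0: "cst n (i, j) = k * (k + 1) / 2 - N" using ne by (simp add: cst_def N_def k_def)
      have key: "- 2 * cst n (i, j) + ((k + 1) * (k + 2) / 2 - N) + ((k - 1) * k / 2 - N) = 1"
        unfolding c0 by (simp add: field_simps)
      show ?thesis using L U A B key unfolding x by linarith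
    qed
  qed
qed


lemma staircase_Suc: "staircase (Suc n) = staircase n \<union> (\<lambda>i. (i, Suc n)) ` {1..Suc n}"
  by (auto simp: staircase_def)

lemma staircase_fin: "finite (staircase n)"
  by (rule finite_subset[of _ "{1..n} \<times> {1..n}"]) (auto simp: staircase_def)

lemma staircase_card: "2 * card (staircase n) = n * (n + 1)"
proof (induction n)
  case 0
  have "staircase 0 = {}" by (auto simp: staircase_def)
  then show ?case by simp
next
  case (Suc n)
  have disj: "staircase n \<inter> (\<lambda>i. (i, Suc n)) ` {1..Suc n} = {}" by (auto simp: staircase_def)
  have ci: "card ((\<lambda>i. (i, Suc n)) ` {1..Suc n}) = Suc n"
    by (subst card_image) (auto simp: inj_on_def)
  have "card (staircase (Suc n)) = card (staircase n) + Suc n"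
    unfolding staircase_Suc using card_Un_disjoint[OF staircase_fin _ disj] ci by simp
  then show ?case using Suc.IH by simp
qed

lemma stair_result:
  assumes "1 \<le> n"
  shows "toggle_equiv (staircase n) prod_le (\<lambda>I. \<Sum>p\<in>staircase n. ind p I) (\<lambda>I. real (card (staircase n)) / 2)"
proof (rule toggle_by_steps[where c = "cst n"])
  show fin: "finite (staircase n)" by (rule staircase_fin)
  show "\<forall>x\<in>staircase n. \<forall>y\<in>staircase n. \<forall>z\<in>staircase n. prod_le x y \<longrightarrow> prod_le y z \<longrightarrow> prod_le x z"
    by (auto simp: prod_le_def)
  show "\<forall>x\<in>staircase n. \<forall>y\<in>staircase n. prod_le x y \<longrightarrow> prod_le y x \<longrightarrow> x = y"
    by (auto simp: prod_le_def)
  have t: "Tog (staircase n) prod_le y {} = (if y = (1, 1) then 1 else 0)" if y: "y \<in> staircase n" for y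
  proof -
    obtain p q where pq: "y = (p, q)" by fastforce
    have "Ax (staircase n) prod_le {} y \<longleftrightarrow> y = (1, 1)"
    proof
      assume h: "Ax (staircase n) prod_le {} y"
      have "(1, 1) \<in> staircase n" using assms by (simp add: st_mem)
      moreover have "prod_le (1, 1) y" using y pq by (simp add: st_mem prod_le_simp)
      ultimately show "y = (1, 1)" using h by (auto simp: Ax_def)
    next
      assume "y = (1, 1)"
      then show "Ax (staircase n) prod_le {} y" using y
        by (auto simp: Ax_def prod_le_def staircase_def)
    qed
    then show ?thesis by (simp add: Tog_eq Mx_def)
  qed
  have "(\<Sum>x\<in>staircase n. cst n x * Tog (staircase n) prod_le x {})
      = (\<Sum>x\<in>staircase n. if x = (1, 1) then cst n x else 0)"
    by (rule sum.cong) (auto simp: t)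
  also have "\<dots> = cst n (1, 1)" using fin assms by (simp add: st_mem)
  also have "\<dots> = - real (card (staircase n)) / 2"
  proof -
    have "real (2 * card (staircase n)) = real (n * (n + 1))" using staircase_card by metis
    then have "real (card (staircase n)) = real n * (real n + 1) / 2" by (simp add: algebra_simps)
    then show ?thesis by (simp add: cst_def)
  qed
  finally show "(\<Sum>x\<in>staircase n. cst n x * Tog (staircase n) prod_le x {}) = - real (card (staircase n)) / 2" .
  fix I x assume I: "I \<in> order_ideals (staircase n) prod_le" and ax: "Ax (staircase n) prod_le I x"
  show "(\<Sum>y\<in>staircase n. cst n y * Tog (staircase n) prod_le y (insert x I))
      - (\<Sum>y\<in>staircase n. cst n y * Tog (staircase n) prod_le y I) = 1"
    using step_sum[OF fin I ax] st_step[OF I ax] by simp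
qed

definition hgt :: "nat \<Rightarrow> nat \<times> nat \<Rightarrow> nat" where
  "hgt n y = (if fst y = 0 then snd y else if fst y = 1 then n else 2 * n - snd y)"

lemma diam_mem: "y \<in> diamond n \<longleftrightarrow>
   (fst y = 0 \<and> 1 \<le> snd y \<and> snd y \<le> n - 1) \<or> y = (1, 1) \<or> y = (1, 2)
   \<or> (fst y = 2 \<and> 1 \<le> snd y \<and> snd y \<le> n - 1)"
  by (cases y) (auto simp: diamond_def)

context
  fixes n :: nat
  assumes n2: "2 \<le> n"
begin

lemma hgt_range: "y \<in> diamond n \<Longrightarrow> 1 \<le> hgt n y \<and> hgt n y \<le> 2 * n - 1"
  using n2 by (cases y) (auto simp: diam_mem hgt_def)

lemma le_hgt: "p \<in> diamond n \<Longrightarrow> q \<in> diamond n \<Longrightarrow> diamond_le p q \<longleftrightarrow> p = q \<or> hgt n p < hgt n q"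
  using n2 by (cases p; cases q) (auto simp: diam_mem hgt_def diamond_le_def)

lemma hgt_uniq: "p \<in> diamond n \<Longrightarrow> q \<in> diamond n \<Longrightarrow> hgt n p = hgt n q \<Longrightarrow> hgt n p \<noteq> n \<Longrightarrow> p = q"
  using n2 by (cases p; cases q) (auto simp: diam_mem hgt_def)

lemma hgt_ex: "1 \<le> s \<Longrightarrow> s \<le> 2 * n - 1 \<Longrightarrow> \<exists>z\<in>diamond n. hgt n z = s"
proof -
  assume s: "1 \<le> s" "s \<le> 2 * n - 1"
  consider "s < n" | "s = n" | "n < s" by arith
  then show ?thesis
  proof cases
    case 1 then show ?thesis using s by (intro bexI[of _ "(0, s)"]) (auto simp: diam_mem hgt_def)
  next
    case 2 then show ?thesis using s by (intro bexI[of _ "(1, 1)"]) (auto simp: diam_mem hgt_def)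
  next
    case 3 then show ?thesis using s by (intro bexI[of _ "(2, 2 * n - s)"]) (auto simp: diam_mem hgt_def)
  qed
qed

definition lev :: "nat \<Rightarrow> (nat \<times> nat) set" where
  "lev s = {y \<in> diamond n. hgt n y = s}"

context
  fixes I x
  assumes I: "I \<in> order_ideals (diamond n) diamond_le"
  and ax: "Ax (diamond n) diamond_le I x"
begin

lemma D_x: "x \<in> diamond n" "x \<notin> I" using ax by (auto simp: Ax_def)

lemma D_below: "z \<in> diamond n \<Longrightarrow> hgt n z < hgt n x \<Longrightarrow> z \<in> I"
  using ax le_hgt[of z x] D_x by (auto simp: Ax_def)

lemma D_notabove: "z \<in> I \<Longrightarrow> hgt n x < hgt n z \<Longrightarrow> False"
  using ideal_down[OF I, of z x] D_x le_hgt[of x z] ideal_sub[OF I] by auto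

lemma D_L: "Lset (diamond n) diamond_le I x = (if \<exists>z\<in>I. hgt n z = hgt n x then {} else lev (hgt n x - 1))"
proof (cases "\<exists>z\<in>I. hgt n z = hgt n x")
  case True
  then obtain z where z: "z \<in> I" "hgt n z = hgt n x" by blast
  have "y \<notin> Lset (diamond n) diamond_le I x" for y
  proof
    assume y: "y \<in> Lset (diamond n) diamond_le I x"
    then have "y \<in> diamond n" "hgt n y < hgt n x" "Mx diamond_le I y"
      using le_hgt[of y x] D_x by (auto simp: Lset_def)
    then have "z = y" using z ideal_sub[OF I] le_hgt[of y z] by (auto simp: Mx_def)
    then show False using z \<open>hgt n y < hgt n x\<close> by simp
  qed
  then show ?thesis using True by auto
next
  case False
  have "y \<in> Lset (diamond n) diamond_le I x \<longleftrightarrow> y \<in> lev (hgt n x - 1)" for y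
  proof
    assume y: "y \<in> Lset (diamond n) diamond_le I x"
    then have yP: "y \<in> diamond n" and hy: "hgt n y < hgt n x"
      using le_hgt[of y x] D_x by (auto simp: Lset_def)
    have "hgt n y = hgt n x - 1"
    proof (rule ccontr)
      assume "hgt n y \<noteq> hgt n x - 1"
      then have lt: "hgt n y + 1 < hgt n x" using hy by arith
      obtain z where z: "z \<in> diamond n" "hgt n z = hgt n y + 1"
        using hgt_ex[of "hgt n y + 1"] hgt_range[OF yP] hgt_range[OF D_x(1)] lt by auto
      have zx: "z \<noteq> x" using z lt by auto
      have "z = y" using Lset_cover[OF I ax y z(1)] zx z lt le_hgt[of y z] le_hgt[of z x] yP D_x by auto
      then show False using z by simp
    qed
    then show "y \<in> lev (hgt n x - 1)" using yP by (simp add: lev_def)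
  next
    assume y: "y \<in> lev (hgt n x - 1)"
    then have yP: "y \<in> diamond n" and hy: "hgt n y = hgt n x - 1" by (auto simp: lev_def)
    have hy1: "hgt n y < hgt n x" using hy hgt_range[OF yP] by arith
    have yI: "y \<in> I" using D_below[OF yP hy1] .
    have "\<forall>z\<in>I. diamond_le y z \<longrightarrow> z = y"
    proof (intro ballI impI)
      fix z assume z: "z \<in> I" "diamond_le y z"
      have zP: "z \<in> diamond n" using z ideal_sub[OF I] by auto
      show "z = y"
      proof (rule ccontr)
        assume "z \<noteq> y"
        then have "hgt n y < hgt n z" using le_hgt[OF yP zP] z by auto
        then have "hgt n x \<le> hgt n z" using hy hy1 by arith
        then show False using D_notabove[OF z(1)] False z(1) by (cases "hgt n x = hgt n z") auto
      qed
    qed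
    then show "y \<in> Lset (diamond n) diamond_le I x"
      using yP yI hy1 le_hgt[OF yP D_x(1)] by (auto simp: Lset_def Mx_def)
  qed
  then show ?thesis using False by auto
qed

lemma D_U: "Uset (diamond n) diamond_le I x =
   (if \<exists>z\<in>diamond n - I. z \<noteq> x \<and> hgt n z = hgt n x then {} else lev (hgt n x + 1))"
proof (cases "\<exists>z\<in>diamond n - I. z \<noteq> x \<and> hgt n z = hgt n x")
  case True
  then obtain z where z: "z \<in> diamond n - I" "z \<noteq> x" "hgt n z = hgt n x" by blast
  have "y \<notin> Uset (diamond n) diamond_le I x" for y
  proof
    assume y: "y \<in> Uset (diamond n) diamond_le I x"
    then have "y \<in> diamond n" "hgt n x < hgt n y" "Ax (diamond n) diamond_le (insert x I) y"
      using le_hgt[of x y] D_x by (auto simp: Uset_def)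
    then have "z = y" using z le_hgt[of z y] by (auto simp: Ax_def)
    then show False using z \<open>hgt n x < hgt n y\<close> by simp
  qed
  then show ?thesis using True by auto
next
  case False
  have "y \<in> Uset (diamond n) diamond_le I x \<longleftrightarrow> y \<in> lev (hgt n x + 1)" for y
  proof
    assume y: "y \<in> Uset (diamond n) diamond_le I x"
    then have yP: "y \<in> diamond n" and hy: "hgt n x < hgt n y"
      using le_hgt[of x y] D_x by (auto simp: Uset_def)
    have "hgt n y = hgt n x + 1"
    proof (rule ccontr)
      assume "hgt n y \<noteq> hgt n x + 1"
      then have lt: "hgt n x + 1 < hgt n y" using hy by arith
      obtain z where z: "z \<in> diamond n" "hgt n z = hgt n x + 1"
        using hgt_ex[of "hgt n x + 1"] hgt_range[OF yP] hgt_range[OF D_x(1)] lt by auto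
      have zx: "z \<noteq> x" using z lt by auto
      have "z = y" using Uset_cover[OF I ax y z(1)] zx z lt le_hgt[of x z] le_hgt[of z y] yP D_x by auto
      then show False using z lt by simp
    qed
    then show "y \<in> lev (hgt n x + 1)" using yP by (simp add: lev_def)
  next
    assume y: "y \<in> lev (hgt n x + 1)"
    then have yP: "y \<in> diamond n" and hy: "hgt n y = hgt n x + 1" by (auto simp: lev_def)
    have yI: "y \<notin> I" using D_notabove[of y] hy by auto
    have "\<forall>z\<in>diamond n - insert x I. diamond_le z y \<longrightarrow> z = y"
    proof (intro ballI impI)
      fix z assume z: "z \<in> diamond n - insert x I" "diamond_le z y"
      show "z = y"
      proof (rule ccontr)
        assume "z \<noteq> y"
        then have "hgt n z < hgt n y" using le_hgt[OF _ yP, of z] z by auto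
        then have "hgt n z \<le> hgt n x" using hy by arith
        moreover have "\<not> hgt n z < hgt n x" using D_below[of z] z by auto
        ultimately show False using False z by auto
      qed
    qed
    then show "y \<in> Uset (diamond n) diamond_le I x"
      using yP yI hy le_hgt[OF D_x(1) yP] by (auto simp: Uset_def Ax_def)
  qed
  then show ?thesis using False by auto
qed

lemma D_cases: "(hgt n x \<noteq> n \<and> \<not> (\<exists>z\<in>I. hgt n z = hgt n x) \<and> \<not> (\<exists>z\<in>diamond n - I. z \<noteq> x \<and> hgt n z = hgt n x))
  \<or> (hgt n x = n \<and> (\<exists>z\<in>I. hgt n z = hgt n x) \<and> \<not> (\<exists>z\<in>diamond n - I. z \<noteq> x \<and> hgt n z = hgt n x))
  \<or> (hgt n x = n \<and> \<not> (\<exists>z\<in>I. hgt n z = hgt n x) \<and> (\<exists>z\<in>diamond n - I. z \<noteq> x \<and> hgt n z = hgt n x))"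
proof (cases "hgt n x = n")
  case False
  have a: "\<not> (\<exists>z\<in>I. hgt n z = hgt n x)"
  proof
    assume "\<exists>z\<in>I. hgt n z = hgt n x"
    then obtain z where z: "z \<in> I" "hgt n z = hgt n x" by blast
    then have "z = x" using hgt_uniq[OF _ D_x(1), of z] False ideal_sub[OF I] by auto
    then show False using z D_x by simp
  qed
  have b: "\<not> (\<exists>z\<in>diamond n - I. z \<noteq> x \<and> hgt n z = hgt n x)"
  proof
    assume "\<exists>z\<in>diamond n - I. z \<noteq> x \<and> hgt n z = hgt n x"
    then obtain z where z: "z \<in> diamond n" "z \<noteq> x" "hgt n z = hgt n x" by blast
    then show False using hgt_uniq[OF _ D_x(1), of z] False by auto
  qed
  show ?thesis using False a b by blast
next
  case True
  have xx: "x = (1, 1) \<or> x = (1, 2)" using True D_x(1) n2 by (auto simp: diam_mem hgt_def)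
  define w :: "nat \<times> nat" where "w = (if x = (1, 1) then (1, 2) else (1, 1))"
  have w: "w \<in> diamond n" "w \<noteq> x" "hgt n w = n" using xx by (auto simp: w_def diam_mem hgt_def)
  have only: "\<And>z. z \<in> diamond n \<Longrightarrow> hgt n z = n \<Longrightarrow> z = x \<or> z = w"
    using xx n2 by (auto simp: w_def diam_mem hgt_def)
  show ?thesis
  proof (cases "w \<in> I")
    case True
    have a: "\<exists>z\<in>I. hgt n z = hgt n x" using True w \<open>hgt n x = n\<close> by auto
    have b: "\<not> (\<exists>z\<in>diamond n - I. z \<noteq> x \<and> hgt n z = hgt n x)"
    proof
      assume "\<exists>z\<in>diamond n - I. z \<noteq> x \<and> hgt n z = hgt n x"
      then obtain z where z: "z \<in> diamond n" "z \<notin> I" "z \<noteq> x" "hgt n z = hgt n x" by blast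
      then have "z = w" using only[of z] \<open>hgt n x = n\<close> by auto
      then show False using z True by simp
    qed
    show ?thesis using a b \<open>hgt n x = n\<close> by blast
  next
    case False
    have a: "\<not> (\<exists>z\<in>I. hgt n z = hgt n x)"
    proof
      assume "\<exists>z\<in>I. hgt n z = hgt n x"
      then obtain z where z: "z \<in> I" "hgt n z = hgt n x" by blast
      then have "z = x \<or> z = w" using only[of z] \<open>hgt n x = n\<close> ideal_sub[OF I] by auto
      then show False using z False D_x by auto
    qed
    have b: "\<exists>z\<in>diamond n - I. z \<noteq> x \<and> hgt n z = hgt n x" using False w \<open>hgt n x = n\<close> by auto
    show ?thesis using a b \<open>hgt n x = n\<close> by blast
  qed
qed

end

definition phi :: "nat \<Rightarrow> real" where
  "phi s = (if s < n then - (real s * (2 * real n + 1 - real s)) / 2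
            else if s = n then - (real n * (real n + 1)) / 4
            else - ((2 * real n - real s) * (real s + 1)) / 2)"

lemma sum_lev: "s \<le> 2 * n \<Longrightarrow> sum (\<lambda>y. phi (hgt n y)) (lev s) = (if s = n then 2 else 1) * phi s"
proof -
  assume s: "s \<le> 2 * n"
  consider "s = 0" | "1 \<le> s \<and> s < n" | "s = n" | "n < s \<and> s < 2 * n" | "s = 2 * n" using s by arith
  then show ?thesis
  proof cases
    case 1
    have "y \<notin> lev s" for y using hgt_range[of y] 1 by (auto simp: lev_def)
    then have "lev s = {}" by auto
    then show ?thesis using 1 n2 by (simp add: phi_def)
  next
    case 2
    have "lev s = {(0, s)}" using 2 by (auto simp: lev_def diam_mem hgt_def)
    then show ?thesis using 2 by (simp add: hgt_def)
  next
    case 3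
    have "lev s = {(1, 1), (1, 2)}" using 3 n2 by (auto simp: lev_def diam_mem hgt_def)
    then show ?thesis using 3 by (simp add: hgt_def)
  next
    case 4
    have "lev s = {(2, 2 * n - s)}" using 4 by (auto simp: lev_def diam_mem hgt_def)
    then show ?thesis using 4 by (simp add: hgt_def)
  next
    case 5
    have "lev s = {}" using 5 hgt_range n2 by (fastforce simp: lev_def)
    then show ?thesis using 5 n2 by (simp add: phi_def)
  qed
qed

lemma diam_step:
  assumes I: "I \<in> order_ideals (diamond n) diamond_le" and ax: "Ax (diamond n) diamond_le I x"
  shows "- 2 * phi (hgt n x) + sum (\<lambda>y. phi (hgt n y)) (Lset (diamond n) diamond_le I x)
          + sum (\<lambda>y. phi (hgt n y)) (Uset (diamond n) diamond_le I x) = 1"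
proof -
  define t where "t = hgt n x"
  have tr: "1 \<le> t" "t \<le> 2 * n - 1" using hgt_range[OF D_x(1)[OF I ax]] by (auto simp: t_def)
  have s1: "sum (\<lambda>y. phi (hgt n y)) (lev (t - 1)) = (if t - 1 = n then 2 else 1) * phi (t - 1)"
    using sum_lev[of "t - 1"] tr by simp
  have s2: "sum (\<lambda>y. phi (hgt n y)) (lev (t + 1)) = (if t + 1 = n then 2 else 1) * phi (t + 1)"
    using sum_lev[of "t + 1"] tr n2 by simp
  have rt1: "real (t - 1) = real t - 1" using tr by (simp add: of_nat_diff)
  have nn: "real n \<ge> 2" using n2 by simp
  consider "t = n" | "t + 1 = n" | "t = n + 1" | "t + 1 < n" | "n + 1 < t" by arith
  note cs = this
  show ?thesis
  proof (cases "t = n")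
    case True
    have "phi (t - 1) = - ((real n - 1) * (real n + 2)) / 2" "phi (t + 1) = - ((real n - 1) * (real n + 2)) / 2"
      "phi t = - (real n * (real n + 1)) / 4"
      using True n2 rt1 by (auto simp: phi_def field_simps)
    then have e: "- 2 * phi t + phi (t - 1) = 1" "- 2 * phi t + phi (t + 1) = 1"
      by (simp_all add: field_simps)
    show ?thesis using D_cases[OF I ax] True unfolding D_L[OF I ax] D_U[OF I ax]
      using s1 s2 e True n2 by (auto simp: t_def)
  next
    case False
    then have LU: "Lset (diamond n) diamond_le I x = lev (t - 1)" "Uset (diamond n) diamond_le I x = lev (t + 1)"
      using D_cases[OF I ax] unfolding D_L[OF I ax] D_U[OF I ax] by (auto simp: t_def)
    have "- 2 * phi t + (if t - 1 = n then 2 else 1) * phi (t - 1) + (if t + 1 = n then 2 else 1) * phi (t + 1) = 1"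
    proof -
      consider "t + 1 = n" | "t = n + 1" | "t + 1 < n" | "n + 1 < t" using False by arith
      then show ?thesis
      proof cases
        case 1
        have nr: "real n = real t + 1" using 1 by simp
        have p1: "phi (t - 1) = - ((real t - 1) * (2 * real n + 1 - (real t - 1))) / 2"
          using 1 rt1 by (simp add: phi_def)
        have p2: "phi t = - (real t * (2 * real n + 1 - real t)) / 2" using 1 by (simp add: phi_def)
        have p3: "phi (t + 1) = - (real n * (real n + 1)) / 4" using 1 by (simp add: phi_def)
        have ne: "t - 1 \<noteq> n" using 1 by arith
        show ?thesis unfolding p1 p2 p3 using 1 ne by (simp add: nr field_simps)
      next
        case 2
        then have "real t = real n + 1" by simp
        then show ?thesis using 2 rt1 by (simp add: phi_def field_simps)
      next
        case 3
        then show ?thesis using rt1 by (simp add: phi_def field_simps)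
      next
        case 4
        then have "\<not> (t - 1 < n)" "t - 1 \<noteq> n" "\<not> t < n" "t \<noteq> n" "\<not> t + 1 < n" "t + 1 \<noteq> n" by arith+
        then show ?thesis using rt1 by (simp add: phi_def field_simps)
      qed
    qed
    then show ?thesis using LU s1 s2 by (simp add: t_def)
  qed
qed

lemma diam_card: "card (diamond n) = 2 * n"
proof -
  have eq: "diamond n = (Pair (0::nat) ` {1..n-1} \<union> {(1, 1), (1, 2)}) \<union> Pair (2::nat) ` {1..n-1}"
    by (auto simp: diamond_def)
  have a1: "card (Pair (0::nat) ` {1..n-1}) = n - 1" by (simp add: card_image inj_on_def)
  have a2: "card {(1 :: nat, 1 :: nat), (1, 2)} = 2" by simp
  have c1: "card (Pair (0::nat) ` {1..n-1} \<union> {(1 :: nat, 1 :: nat), (1, 2)}) = (n - 1) + 2"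
  proof -
    have "card (Pair (0::nat) ` {1..n-1} \<union> {(1 :: nat, 1 :: nat), (1, 2)}) = card (Pair (0::nat) ` {1..n-1}) + card {(1 :: nat, 1 :: nat), (1, 2)}"
    proof (rule card_Un_disjoint)
      show "Pair (0::nat) ` {1..n-1} \<inter> {(1 :: nat, 1 :: nat), (1, 2)} = {}" by auto
    qed auto
    then show ?thesis using a1 a2 by simp
  qed
  have "card (diamond n) = (n - 1 + 2) + (n - 1)"
  proof -
    have "card ((Pair (0::nat) ` {1..n-1} \<union> {(1, 1), (1, 2)}) \<union> Pair (2::nat) ` {1..n-1})
       = card (Pair (0::nat) ` {1..n-1} \<union> {(1, 1), (1, 2)}) + card (Pair (2::nat) ` {1..n-1})"
    proof (rule card_Un_disjoint)
      show "(Pair (0::nat) ` {1..n-1} \<union> {(1, 1), (1, 2)}) \<inter> Pair (2::nat) ` {1..n-1} = {}" by auto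
    qed auto
    moreover have "card (Pair (2::nat) ` {1..n-1}) = n - 1" by (simp add: card_image inj_on_def)
    ultimately show ?thesis unfolding eq using c1 by simp
  qed
  then show ?thesis using n2 by simp
qed

lemma diam_fin: "finite (diamond n)"
  by (simp add: diamond_def)

lemma diam_result:
  "toggle_equiv (diamond n) diamond_le (\<lambda>I. \<Sum>p\<in>diamond n. ind p I) (\<lambda>I. real (card (diamond n)) / 2)"
proof (rule toggle_by_steps[where c = "\<lambda>y. phi (hgt n y)"])
  show fin: "finite (diamond n)" by (rule diam_fin)
  show "\<forall>x\<in>diamond n. \<forall>y\<in>diamond n. \<forall>z\<in>diamond n. diamond_le x y \<longrightarrow> diamond_le y z \<longrightarrow> diamond_le x z"
  proof (intro ballI impI)
    fix a b c assume abc: "a \<in> diamond n" "b \<in> diamond n" "c \<in> diamond n" "diamond_le a b" "diamond_le b c"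
    then show "diamond_le a c" using le_hgt[of a b] le_hgt[of b c] le_hgt[of a c] by auto
  qed
  show "\<forall>x\<in>diamond n. \<forall>y\<in>diamond n. diamond_le x y \<longrightarrow> diamond_le y x \<longrightarrow> x = y"
  proof (intro ballI impI)
    fix a b assume ab: "a \<in> diamond n" "b \<in> diamond n" "diamond_le a b" "diamond_le b a"
    then show "a = b" using le_hgt[of a b] le_hgt[of b a] by auto
  qed
  have t: "Tog (diamond n) diamond_le y {} = (if y \<in> lev 1 then 1 else 0)" if y: "y \<in> diamond n" for y
  proof -
    have "Ax (diamond n) diamond_le {} y \<longleftrightarrow> hgt n y = 1"
    proof
      assume h: "Ax (diamond n) diamond_le {} y"
      show "hgt n y = 1"
      proof (rule ccontr)
        assume "hgt n y \<noteq> 1"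
        then have "1 < hgt n y" using hgt_range[OF y] by arith
        have "1 \<le> 2 * n - 1" using n2 by arith
        then obtain z where z: "z \<in> diamond n" "hgt n z = 1" using hgt_ex[of 1] by auto
        then have "diamond_le z y" using le_hgt[OF z(1) y] \<open>1 < hgt n y\<close> by auto
        then have "z = y" using h z by (auto simp: Ax_def)
        then show False using z \<open>1 < hgt n y\<close> by simp
      qed
    next
      assume "hgt n y = 1"
      then show "Ax (diamond n) diamond_le {} y" using y le_hgt[of _ y] hgt_range
        by (fastforce simp: Ax_def)
    qed
    then show ?thesis using y by (simp add: Tog_eq Mx_def lev_def)
  qed
  have "(\<Sum>x\<in>diamond n. phi (hgt n x) * Tog (diamond n) diamond_le x {})
      = (\<Sum>x\<in>diamond n. if x \<in> lev 1 then phi (hgt n x) else 0)"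
    by (rule sum.cong) (auto simp: t)
  also have "\<dots> = sum (\<lambda>x. phi (hgt n x)) (lev 1)"
    using fin by (simp add: sum.If_cases lev_def Int_def)
  also have "\<dots> = phi 1" using sum_lev[of 1] n2 by simp
  also have "\<dots> = - real (card (diamond n)) / 2" using n2 by (simp add: phi_def diam_card)
  finally show "(\<Sum>x\<in>diamond n. phi (hgt n x) * Tog (diamond n) diamond_le x {}) = - real (card (diamond n)) / 2" .
  fix I x assume I: "I \<in> order_ideals (diamond n) diamond_le" and ax: "Ax (diamond n) diamond_le I x"
  show "(\<Sum>y\<in>diamond n. phi (hgt n y) * Tog (diamond n) diamond_le y (insert x I))
      - (\<Sum>y\<in>diamond n. phi (hgt n y) * Tog (diamond n) diamond_le y I) = 1"
    using step_sum[OF fin I ax, of "\<lambda>y. phi (hgt n y)"] diam_step[OF I ax] by simp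
qed

end

definition leT :: "nat list list \<Rightarrow> nat \<Rightarrow> nat \<Rightarrow> bool" where
  "leT D i j \<longleftrightarrow> i = j \<or> i \<in> set (D ! j)"

fun ids :: "nat list list \<Rightarrow> nat \<Rightarrow> nat set list" where
  "ids D 0 = [{}]"
| "ids D (Suc k) = ids D k @ map (insert k) (filter (\<lambda>I. set (D ! k) \<subseteq> I) (ids D k))"

lemma ids_correct:
  assumes H: "\<forall>j<m. \<forall>i\<in>set (D ! j). i < j"
  shows "k \<le> m \<Longrightarrow> order_ideals {..<k} (leT D) = set (ids D k)"
proof (induction k)
  case 0
  show ?case by (auto simp: order_ideals_def)
next
  case (Suc k)
  have km: "k < m" using Suc.prems by simp
  have "order_ideals {..<Suc k} (leT D) =
      order_ideals {..<k} (leT D) \<union> insert k ` {I \<in> order_ideals {..<k} (leT D). set (D ! k) \<subseteq> I}"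
  proof (intro equalityI subsetI)
    fix I assume I: "I \<in> order_ideals {..<Suc k} (leT D)"
    have sub: "I \<subseteq> {..<Suc k}" and dc: "\<And>x y. x \<in> I \<Longrightarrow> y < Suc k \<Longrightarrow> leT D y x \<Longrightarrow> y \<in> I"
      using I by (auto simp: order_ideals_def)
    show "I \<in> order_ideals {..<k} (leT D) \<union> insert k ` {I \<in> order_ideals {..<k} (leT D). set (D ! k) \<subseteq> I}"
    proof (cases "k \<in> I")
      case False
      then have "I \<in> order_ideals {..<k} (leT D)" using sub dc
        by (auto simp: order_ideals_def less_Suc_eq)
      then show ?thesis by blast
    next
      case True
      define J where "J = I - {k}"
      have "J \<in> order_ideals {..<k} (leT D)"
        unfolding order_ideals_def J_def using sub dc by (auto simp: less_Suc_eq)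
      moreover have "set (D ! k) \<subseteq> J"
      proof
        fix y assume y: "y \<in> set (D ! k)"
        then have "y < k" using H km by auto
        then show "y \<in> J" using dc[OF True, of y] y by (auto simp: leT_def J_def)
      qed
      moreover have "I = insert k J" using True J_def by auto
      ultimately show ?thesis by blast
    qed
  next
    fix I assume I: "I \<in> order_ideals {..<k} (leT D) \<union> insert k ` {I \<in> order_ideals {..<k} (leT D). set (D ! k) \<subseteq> I}"
    show "I \<in> order_ideals {..<Suc k} (leT D)"
    proof (cases "I \<in> order_ideals {..<k} (leT D)")
      case True
      have nk: "\<And>x. x < k \<Longrightarrow> \<not> leT D k x"
      proof
        fix x assume x: "x < k" "leT D k x"
        then have "k \<in> set (D ! x)" by (auto simp: leT_def)
        moreover have "x < m" using x(1) km by simp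
        ultimately have "k < x" using H by blast
        then show False using x by simp
      qed
      have Isub: "I \<subseteq> {..<k}" using True by (simp add: order_ideals_def)
      show ?thesis unfolding order_ideals_def mem_Collect_eq
      proof (intro conjI subsetI ballI impI)
        fix x assume "x \<in> I" then show "x \<in> {..<Suc k}" using Isub by auto
      next
        fix x y assume x: "x \<in> I" and y: "y \<in> {..<Suc k}" and l: "leT D y x"
        have "x < k" using x Isub by auto
        then have "y \<noteq> k" using nk l by auto
        then have "y \<in> {..<k}" using y by auto
        then show "y \<in> I" using True x l by (auto simp: order_ideals_def)
      qed
    next
      case False
      then obtain J where J: "J \<in> order_ideals {..<k} (leT D)" "set (D ! k) \<subseteq> J" "I = insert k J"
        using I by blast
      have nk: "\<And>x. x < k \<Longrightarrow> \<not> leT D k x"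
      proof
        fix x assume x: "x < k" "leT D k x"
        then have "k \<in> set (D ! x)" by (auto simp: leT_def)
        moreover have "x < m" using x(1) km by simp
        ultimately have "k < x" using H by blast
        then show False using x by simp
      qed
      have Jsub: "J \<subseteq> {..<k}" using J(1) by (simp add: order_ideals_def)
      show ?thesis unfolding order_ideals_def mem_Collect_eq
      proof (intro conjI subsetI ballI impI)
        fix x assume "x \<in> I" then show "x \<in> {..<Suc k}" using J Jsub by auto
      next
        fix x y assume x: "x \<in> I" and y: "y \<in> {..<Suc k}" and l: "leT D y x"
        show "y \<in> I"
        proof (cases "x = k")
          case True
          then show ?thesis using l J(2,3) by (auto simp: leT_def)
        next
          case False
          then have xJ: "x \<in> J" using x J(3) by auto
          then have "x < k" using Jsub by auto
          then have "y \<noteq> k" using nk l by auto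
          then have "y \<in> {..<k}" using y by auto
          then show ?thesis using J(1) xJ l J(3) by (auto simp: order_ideals_def)
        qed
      qed
    qed
  qed
  then show ?case using Suc.IH Suc.prems by auto
qed

lemma Tog_T:
  assumes H: "\<forall>j<m. \<forall>i\<in>set (D ! j). i < j"
  and HU: "set (U ! y) = {z. z < m \<and> y \<in> set (D ! z)}"
  and y: "y < m" and I: "I \<subseteq> {..<m}"
  shows "Tog {..<m} (leT D) y I = (if y \<notin> I \<and> set (D ! y) \<subseteq> I then 1 else 0)
     - (if y \<in> I \<and> (\<forall>z\<in>set (U ! y). z \<notin> I) then 1 else 0)"
proof -
  have ny: "y \<notin> set (D ! y)" using H y by auto
  have Dy: "set (D ! y) \<subseteq> {..<m}" using H y by fastforce
  have p: "(y \<in> {..<m} - I \<and> (\<forall>z\<in>{..<m} - I. leT D z y \<longrightarrow> z = y)) \<longleftrightarrow> (y \<notin> I \<and> set (D ! y) \<subseteq> I)"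
    using y Dy ny by (auto simp: leT_def)
  have q: "(y \<in> I \<and> (\<forall>z\<in>I. leT D y z \<longrightarrow> z = y)) \<longleftrightarrow> (y \<in> I \<and> (\<forall>z\<in>set (U ! y). z \<notin> I))"
    using HU I ny by (auto simp: leT_def)
  show ?thesis unfolding Tog_def Tplus_def Tminus_def using p q by simp
qed

lemma exc_toggle:
  fixes c :: "real list"
  assumes xs: "set xs = {..<m}" "distinct xs"
  and H: "\<forall>j<m. \<forall>i\<in>set (D ! j). i < j"
  and HU: "\<forall>y<m. set (U ! y) = {z. z < m \<and> y \<in> set (D ! z)}"
  and chk: "\<forall>I\<in>set (ids D m). real (card I) - real m / 2 =
     sum_list (map (\<lambda>y. c ! y * ((if y \<notin> I \<and> set (D ! y) \<subseteq> I then 1 else 0)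
     - (if y \<in> I \<and> (\<forall>z\<in>set (U ! y). z \<notin> I) then 1 else 0))) xs)"
  shows "toggle_equiv {..<m} (leT D) (\<lambda>I. \<Sum>p\<in>{..<m}. ind p I) (\<lambda>I. real (card {..<m}) / 2)"
  unfolding toggle_equiv_def
proof (intro exI[of _ "\<lambda>y. c ! y"] ballI)
  fix I assume I: "I \<in> order_ideals {..<m} (leT D)"
  have Isub: "I \<subseteq> {..<m}" using I by (simp add: order_ideals_def)
  have Iin: "I \<in> set (ids D m)" using I ids_correct[OF H, of m] by blast
  have "(\<Sum>p\<in>{..<m}. ind p I) - real (card {..<m}) / 2 = real (card I) - real m / 2"
    using sum_ind_card[OF _ Isub] by simp
  also have "\<dots> = sum_list (map (\<lambda>y. c ! y * ((if y \<notin> I \<and> set (D ! y) \<subseteq> I then 1 else 0)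
     - (if y \<in> I \<and> (\<forall>z\<in>set (U ! y). z \<notin> I) then 1 else 0))) xs)"
    using chk Iin by blast
  also have "\<dots> = (\<Sum>y\<in>{..<m}. c ! y * ((if y \<notin> I \<and> set (D ! y) \<subseteq> I then 1 else 0)
     - (if y \<in> I \<and> (\<forall>z\<in>set (U ! y). z \<notin> I) then 1 else 0)))"
    unfolding xs(1)[symmetric] using sum_list_distinct_conv_sum_set[OF xs(2)] by simp
  also have "\<dots> = (\<Sum>y\<in>{..<m}. c ! y * Tog {..<m} (leT D) y I)"
  proof (rule sum.cong)
    fix y assume y: "y \<in> {..<m}"
    have yl: "y < m" using y by simp
    show "c ! y * ((if y \<notin> I \<and> set (D ! y) \<subseteq> I then 1 else 0)
     - (if y \<in> I \<and> (\<forall>z\<in>set (U ! y). z \<notin> I) then 1 else 0)) = c ! y * Tog {..<m} (leT D) y I"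
      using Tog_T[OF H HU[rule_format, OF yl] yl Isub] by simp
  qed simp
  finally show "(\<Sum>p\<in>{..<m}. ind p I) - real (card {..<m}) / 2 = (\<Sum>y\<in>{..<m}. c ! y * Tog {..<m} (leT D) y I)" .
qed

lemma exc_iso:
  assumes d: "distinct L" and m: "length L = m"
  and le: "\<forall>i<m. \<forall>j<m. leT D i j \<longleftrightarrow> R (L ! i) (L ! j)"
  shows "order_iso {..<m} (leT D) (set L) R ((!) L)"
  unfolding order_iso_def using bij_betw_nth[OF d _ refl, of "{..<m}"] m le by auto

fun idsA :: "nat list list \<Rightarrow> nat list \<Rightarrow> nat set list \<Rightarrow> nat set list" where
  "idsA D [] acc = acc"
| "idsA D (k # ks) acc = idsA D ks (acc @ map (insert k) (filter (\<lambda>I. set (D ! k) \<subseteq> I) acc))"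

lemma idsA_append: "idsA D (xs @ ys) acc = idsA D ys (idsA D xs acc)"
  by (induction xs arbitrary: acc) auto

lemma ids_idsA: "ids D j = idsA D [0..<j] [{}]"
proof (induction j)
  case 0 then show ?case by simp
next
  case (Suc j)
  then show ?case by (simp add: idsA_append)
qed

lemma upt_num: "[0..<numeral k] = [0..<pred_numeral k] @ [pred_numeral k]"
  by (simp add: numeral_eq_Suc)

lemma ids_numeral: "ids D (numeral k) = ids D (pred_numeral k) @ map (insert (pred_numeral k)) (filter (\<lambda>I. set (D ! pred_numeral k) \<subseteq> I) (ids D (pred_numeral k)))"
  by (simp add: numeral_eq_Suc)

lemma all_list: "set xs = {..<m} \<Longrightarrow> list_all P xs \<Longrightarrow> \<forall>j<m. P j"
  by (auto simp: list_all_iff)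

definition L6 :: "int list list" where "L6 = [[1,0,0,0,0,0], [1,0,1,0,0,0], [1,0,1,1,0,0], [1,0,1,1,1,0], [1,0,1,1,1,1], [1,1,1,1,0,0], [1,1,1,1,1,0], [1,1,1,1,1,1], [1,1,1,2,1,0], [1,1,1,2,1,1], [1,1,1,2,2,1], [1,1,2,2,1,0], [1,1,2,2,1,1], [1,1,2,2,2,1], [1,1,2,3,2,1], [1,2,2,3,2,1]]"
definition D6 :: "nat list list" where "D6 = [[], [0], [0,1], [0,1,2], [0,1,2,3], [0,1,2], [0,1,2,3,5], [0,1,2,3,4,5,6], [0,1,2,3,5,6], [0,1,2,3,4,5,6,7,8], [0,1,2,3,4,5,6,7,8,9], [0,1,2,3,5,6,8], [0,1,2,3,4,5,6,7,8,9,11], [0,1,2,3,4,5,6,7,8,9,10,11,12], [0,1,2,3,4,5,6,7,8,9,10,11,12,13], [0,1,2,3,4,5,6,7,8,9,10,11,12,13,14]]"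
definition U6 :: "nat list list" where "U6 = [[15,14,13,12,11,10,9,8,7,6,5,4,3,2,1], [15,14,13,12,11,10,9,8,7,6,5,4,3,2], [15,14,13,12,11,10,9,8,7,6,5,4,3], [15,14,13,12,11,10,9,8,7,6,4], [15,14,13,12,10,9,7], [15,14,13,12,11,10,9,8,7,6], [15,14,13,12,11,10,9,8,7], [15,14,13,12,10,9], [15,14,13,12,11,10,9], [15,14,13,12,10], [15,14,13], [15,14,13,12], [15,14,13], [15,14], [15], []]"
definition C6 :: "real list" where "C6 = [(-8), (-15), (-21), (-15), (-8), (-11), (-21), (-15), (-15), (-21), (-11), (-8), (-15), (-21), (-15), (-8)]"
definition X6 :: "nat list" where "X6 = [15,14,13,12,11,10,9,8,7,6,5,4,3,2,1,0]"

lemma X6_set: "set X6 = {..<16}"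
  by (simp add: X6_def lessThan_nat_numeral lessThan_Suc One_nat_def)

lemma X6_dist: "distinct X6"
  by (simp add: X6_def)

lemma H6: "\<forall>j<16. \<forall>i\<in>set (D6 ! j). i < j"
  by (rule all_list[OF X6_set]) (simp add: D6_def X6_def)

lemma HU6: "\<forall>y<16. set (U6 ! y) = {z. z < 16 \<and> y \<in> set (D6 ! z)}"
proof (rule all_list[OF X6_set])
  have e: "{z. z < (16::nat) \<and> P z} = set (filter P X6)" for P using X6_set by auto
  show "list_all (\<lambda>y. set (U6 ! y) = {z. z < 16 \<and> y \<in> set (D6 ! z)}) X6"
    unfolding e by (simp add: U6_def D6_def X6_def)
qed

lemma iso6: "order_iso {..<16} (leT D6) LambdaE6 root_le ((!) L6)"
proof -
  have "LambdaE6 = set L6" by (simp add: L6_def LambdaE6_def)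
  moreover have "order_iso {..<16} (leT D6) (set L6) root_le ((!) L6)"
  proof (rule exc_iso)
    show "distinct L6" by (simp add: L6_def)
    show "length L6 = 16" by (simp add: L6_def)
    show "\<forall>i<16. \<forall>j<16. leT D6 i j = root_le (L6 ! i) (L6 ! j)"
      by (rule all_list[OF X6_set]) (simp add: X6_def; intro conjI; rule all_list[OF X6_set]; simp add: X6_def leT_def root_le_def L6_def D6_def)
  qed
  ultimately show ?thesis by simp
qed

lemma D6_0: "D6 ! 0 = []" by (simp add: D6_def)
lemma U6_0: "U6 ! 0 = [15,14,13,12,11,10,9,8,7,6,5,4,3,2,1]" by (simp add: U6_def)
lemma C6_0: "C6 ! 0 = (-8)" by (simp add: C6_def)
lemma D6_1: "D6 ! 1 = [0]" by (simp add: D6_def)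
lemma U6_1: "U6 ! 1 = [15,14,13,12,11,10,9,8,7,6,5,4,3,2]" by (simp add: U6_def)
lemma C6_1: "C6 ! 1 = (-15)" by (simp add: C6_def)
lemma D6_2: "D6 ! 2 = [0,1]" by (simp add: D6_def)
lemma U6_2: "U6 ! 2 = [15,14,13,12,11,10,9,8,7,6,5,4,3]" by (simp add: U6_def)
lemma C6_2: "C6 ! 2 = (-21)" by (simp add: C6_def)
lemma D6_3: "D6 ! 3 = [0,1,2]" by (simp add: D6_def)
lemma U6_3: "U6 ! 3 = [15,14,13,12,11,10,9,8,7,6,4]" by (simp add: U6_def)
lemma C6_3: "C6 ! 3 = (-15)" by (simp add: C6_def)
lemma D6_4: "D6 ! 4 = [0,1,2,3]" by (simp add: D6_def)
lemma U6_4: "U6 ! 4 = [15,14,13,12,10,9,7]" by (simp add: U6_def)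
lemma C6_4: "C6 ! 4 = (-8)" by (simp add: C6_def)
lemma D6_5: "D6 ! 5 = [0,1,2]" by (simp add: D6_def)
lemma U6_5: "U6 ! 5 = [15,14,13,12,11,10,9,8,7,6]" by (simp add: U6_def)
lemma C6_5: "C6 ! 5 = (-11)" by (simp add: C6_def)
lemma D6_6: "D6 ! 6 = [0,1,2,3,5]" by (simp add: D6_def)
lemma U6_6: "U6 ! 6 = [15,14,13,12,11,10,9,8,7]" by (simp add: U6_def)
lemma C6_6: "C6 ! 6 = (-21)" by (simp add: C6_def)
lemma D6_7: "D6 ! 7 = [0,1,2,3,4,5,6]" by (simp add: D6_def)
lemma U6_7: "U6 ! 7 = [15,14,13,12,10,9]" by (simp add: U6_def)
lemma C6_7: "C6 ! 7 = (-15)" by (simp add: C6_def)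
lemma D6_8: "D6 ! 8 = [0,1,2,3,5,6]" by (simp add: D6_def)
lemma U6_8: "U6 ! 8 = [15,14,13,12,11,10,9]" by (simp add: U6_def)
lemma C6_8: "C6 ! 8 = (-15)" by (simp add: C6_def)
lemma D6_9: "D6 ! 9 = [0,1,2,3,4,5,6,7,8]" by (simp add: D6_def)
lemma U6_9: "U6 ! 9 = [15,14,13,12,10]" by (simp add: U6_def)
lemma C6_9: "C6 ! 9 = (-21)" by (simp add: C6_def)
lemma D6_10: "D6 ! 10 = [0,1,2,3,4,5,6,7,8,9]" by (simp add: D6_def)
lemma U6_10: "U6 ! 10 = [15,14,13]" by (simp add: U6_def)
lemma C6_10: "C6 ! 10 = (-11)" by (simp add: C6_def)
lemma D6_11: "D6 ! 11 = [0,1,2,3,5,6,8]" by (simp add: D6_def)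
lemma U6_11: "U6 ! 11 = [15,14,13,12]" by (simp add: U6_def)
lemma C6_11: "C6 ! 11 = (-8)" by (simp add: C6_def)
lemma D6_12: "D6 ! 12 = [0,1,2,3,4,5,6,7,8,9,11]" by (simp add: D6_def)
lemma U6_12: "U6 ! 12 = [15,14,13]" by (simp add: U6_def)
lemma C6_12: "C6 ! 12 = (-15)" by (simp add: C6_def)
lemma D6_13: "D6 ! 13 = [0,1,2,3,4,5,6,7,8,9,10,11,12]" by (simp add: D6_def)
lemma U6_13: "U6 ! 13 = [15,14]" by (simp add: U6_def)
lemma C6_13: "C6 ! 13 = (-21)" by (simp add: C6_def)
lemma D6_14: "D6 ! 14 = [0,1,2,3,4,5,6,7,8,9,10,11,12,13]" by (simp add: D6_def)
lemma U6_14: "U6 ! 14 = [15]" by (simp add: U6_def)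
lemma C6_14: "C6 ! 14 = (-15)" by (simp add: C6_def)
lemma D6_15: "D6 ! 15 = [0,1,2,3,4,5,6,7,8,9,10,11,12,13,14]" by (simp add: D6_def)
lemma U6_15: "U6 ! 15 = []" by (simp add: U6_def)
lemma C6_15: "C6 ! 15 = (-8)" by (simp add: C6_def)
lemma D6_S: "D6 ! Suc 0 = [0]" by (simp add: D6_def)
lemma U6_S: "U6 ! Suc 0 = [15,14,13,12,11,10,9,8,7,6,5,4,3,2]" by (simp add: U6_def)
lemma C6_S: "C6 ! Suc 0 = (-15)" by (simp add: C6_def)
lemmas nth6 = D6_S U6_S C6_S D6_0 U6_0 C6_0 D6_1 U6_1 C6_1 D6_2 U6_2 C6_2 D6_3 U6_3 C6_3 D6_4 U6_4 C6_4 D6_5 U6_5 C6_5 D6_6 U6_6 C6_6 D6_7 U6_7 C6_7 D6_8 U6_8 C6_8 D6_9 U6_9 C6_9 D6_10 U6_10 C6_10 D6_11 U6_11 C6_11 D6_12 U6_12 C6_12 D6_13 U6_13 C6_13 D6_14 U6_14 C6_14 D6_15 U6_15 C6_15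

lemma chk6: "\<forall>I\<in>set (ids D6 16). real (card I) - real 16 / 2 =
     sum_list (map (\<lambda>y. C6 ! y * ((if y \<notin> I \<and> set (D6 ! y) \<subseteq> I then 1 else 0)
     - (if y \<in> I \<and> (\<forall>z\<in>set (U6 ! y). z \<notin> I) then 1 else 0))) X6)"
  by (simp add: ids_idsA upt_num nth6 X6_def One_nat_def)

lemma E6_result: "toggle_equiv LambdaE6 root_le (\<lambda>I. \<Sum>p\<in>LambdaE6. ind p I) (\<lambda>I. real (card LambdaE6) / 2)"
proof -
  have tq: "toggle_equiv {..<16} (leT D6) (\<lambda>I. \<Sum>p\<in>{..<16}. ind p I) (\<lambda>I. real (card {..<16::nat}) / 2)"
    by (rule exc_toggle[OF X6_set X6_dist H6 HU6 chk6])
  show ?thesis using iso_transfer[OF order_iso_inv[OF iso6] _ tq] by simp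
qed

definition L7 :: "int list list" where "L7 = [[0,0,0,0,0,0,1], [0,0,0,0,0,1,1], [0,0,0,0,1,1,1], [0,0,0,1,1,1,1], [0,0,1,1,1,1,1], [0,1,0,1,1,1,1], [0,1,1,1,1,1,1], [0,1,1,2,1,1,1], [0,1,1,2,2,1,1], [0,1,1,2,2,2,1], [1,0,1,1,1,1,1], [1,1,1,1,1,1,1], [1,1,1,2,1,1,1], [1,1,1,2,2,1,1], [1,1,1,2,2,2,1], [1,1,2,2,1,1,1], [1,1,2,2,2,1,1], [1,1,2,2,2,2,1], [1,1,2,3,2,1,1], [1,1,2,3,2,2,1], [1,1,2,3,3,2,1], [1,2,2,3,2,1,1], [1,2,2,3,2,2,1], [1,2,2,3,3,2,1], [1,2,2,4,3,2,1], [1,2,3,4,3,2,1], [2,2,3,4,3,2,1]]"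
definition D7 :: "nat list list" where "D7 = [[], [0], [0,1], [0,1,2], [0,1,2,3], [0,1,2,3], [0,1,2,3,4,5], [0,1,2,3,4,5,6], [0,1,2,3,4,5,6,7], [0,1,2,3,4,5,6,7,8], [0,1,2,3,4], [0,1,2,3,4,5,6,10], [0,1,2,3,4,5,6,7,10,11], [0,1,2,3,4,5,6,7,8,10,11,12], [0,1,2,3,4,5,6,7,8,9,10,11,12,13], [0,1,2,3,4,5,6,7,10,11,12], [0,1,2,3,4,5,6,7,8,10,11,12,13,15], [0,1,2,3,4,5,6,7,8,9,10,11,12,13,14,15,16], [0,1,2,3,4,5,6,7,8,10,11,12,13,15,16], [0,1,2,3,4,5,6,7,8,9,10,11,12,13,14,15,16,17,18], [0,1,2,3,4,5,6,7,8,9,10,11,12,13,14,15,16,17,18,19], [0,1,2,3,4,5,6,7,8,10,11,12,13,15,16,18], [0,1,2,3,4,5,6,7,8,9,10,11,12,13,14,15,16,17,18,19,21], [0,1,2,3,4,5,6,7,8,9,10,11,12,13,14,15,16,17,18,19,20,21,22], [0,1,2,3,4,5,6,7,8,9,10,11,12,13,14,15,16,17,18,19,20,21,22,23], [0,1,2,3,4,5,6,7,8,9,10,11,12,13,14,15,16,17,18,19,20,21,22,23,24], [0,1,2,3,4,5,6,7,8,9,10,11,12,13,14,15,16,17,18,19,20,21,22,23,24,25]]"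
definition U7 :: "nat list list" where "U7 = [[26,25,24,23,22,21,20,19,18,17,16,15,14,13,12,11,10,9,8,7,6,5,4,3,2,1], [26,25,24,23,22,21,20,19,18,17,16,15,14,13,12,11,10,9,8,7,6,5,4,3,2], [26,25,24,23,22,21,20,19,18,17,16,15,14,13,12,11,10,9,8,7,6,5,4,3], [26,25,24,23,22,21,20,19,18,17,16,15,14,13,12,11,10,9,8,7,6,5,4], [26,25,24,23,22,21,20,19,18,17,16,15,14,13,12,11,10,9,8,7,6], [26,25,24,23,22,21,20,19,18,17,16,15,14,13,12,11,9,8,7,6], [26,25,24,23,22,21,20,19,18,17,16,15,14,13,12,11,9,8,7], [26,25,24,23,22,21,20,19,18,17,16,15,14,13,12,9,8], [26,25,24,23,22,21,20,19,18,17,16,14,13,9], [26,25,24,23,22,20,19,17,14], [26,25,24,23,22,21,20,19,18,17,16,15,14,13,12,11], [26,25,24,23,22,21,20,19,18,17,16,15,14,13,12], [26,25,24,23,22,21,20,19,18,17,16,15,14,13], [26,25,24,23,22,21,20,19,18,17,16,14], [26,25,24,23,22,20,19,17], [26,25,24,23,22,21,20,19,18,17,16], [26,25,24,23,22,21,20,19,18,17], [26,25,24,23,22,20,19], [26,25,24,23,22,21,20,19], [26,25,24,23,22,20], [26,25,24,23], [26,25,24,23,22], [26,25,24,23], [26,25,24], [26,25], [26], []]"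
definition C7 :: "real list" where "C7 = [(-27 / 2), (-26), (-75 / 2), (-48), (-33), (-49 / 2), (-48), (-75 / 2), (-26), (-27 / 2), (-17), (-33), (-48), (-75 / 2), (-26), (-49 / 2), (-48), (-75 / 2), (-33), (-48), (-49 / 2), (-17), (-33), (-48), (-75 / 2), (-26), (-27 / 2)]"
definition X7 :: "nat list" where "X7 = [26,25,24,23,22,21,20,19,18,17,16,15,14,13,12,11,10,9,8,7,6,5,4,3,2,1,0]"

lemma X7_set: "set X7 = {..<27}"
  by (simp add: X7_def lessThan_nat_numeral lessThan_Suc One_nat_def)

lemma X7_dist: "distinct X7"
  by (simp add: X7_def)

lemma H7: "\<forall>j<27. \<forall>i\<in>set (D7 ! j). i < j"
  by (rule all_list[OF X7_set]) (simp add: D7_def X7_def)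

lemma HU7: "\<forall>y<27. set (U7 ! y) = {z. z < 27 \<and> y \<in> set (D7 ! z)}"
proof (rule all_list[OF X7_set])
  have e: "{z. z < (27::nat) \<and> P z} = set (filter P X7)" for P using X7_set by auto
  show "list_all (\<lambda>y. set (U7 ! y) = {z. z < 27 \<and> y \<in> set (D7 ! z)}) X7"
    unfolding e by (simp add: U7_def D7_def X7_def)
qed

lemma iso7: "order_iso {..<27} (leT D7) LambdaE7 root_le ((!) L7)"
proof -
  have "LambdaE7 = set L7" by (simp add: L7_def LambdaE7_def)
  moreover have "order_iso {..<27} (leT D7) (set L7) root_le ((!) L7)"
  proof (rule exc_iso)
    show "distinct L7" by (simp add: L7_def)
    show "length L7 = 27" by (simp add: L7_def)
    show "\<forall>i<27. \<forall>j<27. leT D7 i j = root_le (L7 ! i) (L7 ! j)"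
      by (rule all_list[OF X7_set]) (simp add: X7_def; intro conjI; rule all_list[OF X7_set]; simp add: X7_def leT_def root_le_def L7_def D7_def)
  qed
  ultimately show ?thesis by simp
qed

lemma D7_0: "D7 ! 0 = []" by (simp add: D7_def)
lemma U7_0: "U7 ! 0 = [26,25,24,23,22,21,20,19,18,17,16,15,14,13,12,11,10,9,8,7,6,5,4,3,2,1]" by (simp add: U7_def)
lemma C7_0: "C7 ! 0 = (-27 / 2)" by (simp add: C7_def)
lemma D7_1: "D7 ! 1 = [0]" by (simp add: D7_def)
lemma U7_1: "U7 ! 1 = [26,25,24,23,22,21,20,19,18,17,16,15,14,13,12,11,10,9,8,7,6,5,4,3,2]" by (simp add: U7_def)
lemma C7_1: "C7 ! 1 = (-26)" by (simp add: C7_def)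
lemma D7_2: "D7 ! 2 = [0,1]" by (simp add: D7_def)
lemma U7_2: "U7 ! 2 = [26,25,24,23,22,21,20,19,18,17,16,15,14,13,12,11,10,9,8,7,6,5,4,3]" by (simp add: U7_def)
lemma C7_2: "C7 ! 2 = (-75 / 2)" by (simp add: C7_def)
lemma D7_3: "D7 ! 3 = [0,1,2]" by (simp add: D7_def)
lemma U7_3: "U7 ! 3 = [26,25,24,23,22,21,20,19,18,17,16,15,14,13,12,11,10,9,8,7,6,5,4]" by (simp add: U7_def)
lemma C7_3: "C7 ! 3 = (-48)" by (simp add: C7_def)
lemma D7_4: "D7 ! 4 = [0,1,2,3]" by (simp add: D7_def)
lemma U7_4: "U7 ! 4 = [26,25,24,23,22,21,20,19,18,17,16,15,14,13,12,11,10,9,8,7,6]" by (simp add: U7_def)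
lemma C7_4: "C7 ! 4 = (-33)" by (simp add: C7_def)
lemma D7_5: "D7 ! 5 = [0,1,2,3]" by (simp add: D7_def)
lemma U7_5: "U7 ! 5 = [26,25,24,23,22,21,20,19,18,17,16,15,14,13,12,11,9,8,7,6]" by (simp add: U7_def)
lemma C7_5: "C7 ! 5 = (-49 / 2)" by (simp add: C7_def)
lemma D7_6: "D7 ! 6 = [0,1,2,3,4,5]" by (simp add: D7_def)
lemma U7_6: "U7 ! 6 = [26,25,24,23,22,21,20,19,18,17,16,15,14,13,12,11,9,8,7]" by (simp add: U7_def)
lemma C7_6: "C7 ! 6 = (-48)" by (simp add: C7_def)
lemma D7_7: "D7 ! 7 = [0,1,2,3,4,5,6]" by (simp add: D7_def)
lemma U7_7: "U7 ! 7 = [26,25,24,23,22,21,20,19,18,17,16,15,14,13,12,9,8]" by (simp add: U7_def)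
lemma C7_7: "C7 ! 7 = (-75 / 2)" by (simp add: C7_def)
lemma D7_8: "D7 ! 8 = [0,1,2,3,4,5,6,7]" by (simp add: D7_def)
lemma U7_8: "U7 ! 8 = [26,25,24,23,22,21,20,19,18,17,16,14,13,9]" by (simp add: U7_def)
lemma C7_8: "C7 ! 8 = (-26)" by (simp add: C7_def)
lemma D7_9: "D7 ! 9 = [0,1,2,3,4,5,6,7,8]" by (simp add: D7_def)
lemma U7_9: "U7 ! 9 = [26,25,24,23,22,20,19,17,14]" by (simp add: U7_def)
lemma C7_9: "C7 ! 9 = (-27 / 2)" by (simp add: C7_def)
lemma D7_10: "D7 ! 10 = [0,1,2,3,4]" by (simp add: D7_def)
lemma U7_10: "U7 ! 10 = [26,25,24,23,22,21,20,19,18,17,16,15,14,13,12,11]" by (simp add: U7_def)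
lemma C7_10: "C7 ! 10 = (-17)" by (simp add: C7_def)
lemma D7_11: "D7 ! 11 = [0,1,2,3,4,5,6,10]" by (simp add: D7_def)
lemma U7_11: "U7 ! 11 = [26,25,24,23,22,21,20,19,18,17,16,15,14,13,12]" by (simp add: U7_def)
lemma C7_11: "C7 ! 11 = (-33)" by (simp add: C7_def)
lemma D7_12: "D7 ! 12 = [0,1,2,3,4,5,6,7,10,11]" by (simp add: D7_def)
lemma U7_12: "U7 ! 12 = [26,25,24,23,22,21,20,19,18,17,16,15,14,13]" by (simp add: U7_def)
lemma C7_12: "C7 ! 12 = (-48)" by (simp add: C7_def)
lemma D7_13: "D7 ! 13 = [0,1,2,3,4,5,6,7,8,10,11,12]" by (simp add: D7_def)
lemma U7_13: "U7 ! 13 = [26,25,24,23,22,21,20,19,18,17,16,14]" by (simp add: U7_def)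
lemma C7_13: "C7 ! 13 = (-75 / 2)" by (simp add: C7_def)
lemma D7_14: "D7 ! 14 = [0,1,2,3,4,5,6,7,8,9,10,11,12,13]" by (simp add: D7_def)
lemma U7_14: "U7 ! 14 = [26,25,24,23,22,20,19,17]" by (simp add: U7_def)
lemma C7_14: "C7 ! 14 = (-26)" by (simp add: C7_def)
lemma D7_15: "D7 ! 15 = [0,1,2,3,4,5,6,7,10,11,12]" by (simp add: D7_def)
lemma U7_15: "U7 ! 15 = [26,25,24,23,22,21,20,19,18,17,16]" by (simp add: U7_def)
lemma C7_15: "C7 ! 15 = (-49 / 2)" by (simp add: C7_def)
lemma D7_16: "D7 ! 16 = [0,1,2,3,4,5,6,7,8,10,11,12,13,15]" by (simp add: D7_def)
lemma U7_16: "U7 ! 16 = [26,25,24,23,22,21,20,19,18,17]" by (simp add: U7_def)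
lemma C7_16: "C7 ! 16 = (-48)" by (simp add: C7_def)
lemma D7_17: "D7 ! 17 = [0,1,2,3,4,5,6,7,8,9,10,11,12,13,14,15,16]" by (simp add: D7_def)
lemma U7_17: "U7 ! 17 = [26,25,24,23,22,20,19]" by (simp add: U7_def)
lemma C7_17: "C7 ! 17 = (-75 / 2)" by (simp add: C7_def)
lemma D7_18: "D7 ! 18 = [0,1,2,3,4,5,6,7,8,10,11,12,13,15,16]" by (simp add: D7_def)
lemma U7_18: "U7 ! 18 = [26,25,24,23,22,21,20,19]" by (simp add: U7_def)
lemma C7_18: "C7 ! 18 = (-33)" by (simp add: C7_def)
lemma D7_19: "D7 ! 19 = [0,1,2,3,4,5,6,7,8,9,10,11,12,13,14,15,16,17,18]" by (simp add: D7_def)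
lemma U7_19: "U7 ! 19 = [26,25,24,23,22,20]" by (simp add: U7_def)
lemma C7_19: "C7 ! 19 = (-48)" by (simp add: C7_def)
lemma D7_20: "D7 ! 20 = [0,1,2,3,4,5,6,7,8,9,10,11,12,13,14,15,16,17,18,19]" by (simp add: D7_def)
lemma U7_20: "U7 ! 20 = [26,25,24,23]" by (simp add: U7_def)
lemma C7_20: "C7 ! 20 = (-49 / 2)" by (simp add: C7_def)
lemma D7_21: "D7 ! 21 = [0,1,2,3,4,5,6,7,8,10,11,12,13,15,16,18]" by (simp add: D7_def)
lemma U7_21: "U7 ! 21 = [26,25,24,23,22]" by (simp add: U7_def)
lemma C7_21: "C7 ! 21 = (-17)" by (simp add: C7_def)
lemma D7_22: "D7 ! 22 = [0,1,2,3,4,5,6,7,8,9,10,11,12,13,14,15,16,17,18,19,21]" by (simp add: D7_def)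
lemma U7_22: "U7 ! 22 = [26,25,24,23]" by (simp add: U7_def)
lemma C7_22: "C7 ! 22 = (-33)" by (simp add: C7_def)
lemma D7_23: "D7 ! 23 = [0,1,2,3,4,5,6,7,8,9,10,11,12,13,14,15,16,17,18,19,20,21,22]" by (simp add: D7_def)
lemma U7_23: "U7 ! 23 = [26,25,24]" by (simp add: U7_def)
lemma C7_23: "C7 ! 23 = (-48)" by (simp add: C7_def)
lemma D7_24: "D7 ! 24 = [0,1,2,3,4,5,6,7,8,9,10,11,12,13,14,15,16,17,18,19,20,21,22,23]" by (simp add: D7_def)
lemma U7_24: "U7 ! 24 = [26,25]" by (simp add: U7_def)
lemma C7_24: "C7 ! 24 = (-75 / 2)" by (simp add: C7_def)
lemma D7_25: "D7 ! 25 = [0,1,2,3,4,5,6,7,8,9,10,11,12,13,14,15,16,17,18,19,20,21,22,23,24]" by (simp add: D7_def)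
lemma U7_25: "U7 ! 25 = [26]" by (simp add: U7_def)
lemma C7_25: "C7 ! 25 = (-26)" by (simp add: C7_def)
lemma D7_26: "D7 ! 26 = [0,1,2,3,4,5,6,7,8,9,10,11,12,13,14,15,16,17,18,19,20,21,22,23,24,25]" by (simp add: D7_def)
lemma U7_26: "U7 ! 26 = []" by (simp add: U7_def)
lemma C7_26: "C7 ! 26 = (-27 / 2)" by (simp add: C7_def)
lemma D7_S: "D7 ! Suc 0 = [0]" by (simp add: D7_def)
lemma U7_S: "U7 ! Suc 0 = [26,25,24,23,22,21,20,19,18,17,16,15,14,13,12,11,10,9,8,7,6,5,4,3,2]" by (simp add: U7_def)
lemma C7_S: "C7 ! Suc 0 = (-26)" by (simp add: C7_def)
lemmas nth7 = D7_S U7_S C7_S D7_0 U7_0 C7_0 D7_1 U7_1 C7_1 D7_2 U7_2 C7_2 D7_3 U7_3 C7_3 D7_4 U7_4 C7_4 D7_5 U7_5 C7_5 D7_6 U7_6 C7_6 D7_7 U7_7 C7_7 D7_8 U7_8 C7_8 D7_9 U7_9 C7_9 D7_10 U7_10 C7_10 D7_11 U7_11 C7_11 D7_12 U7_12 C7_12 D7_13 U7_13 C7_13 D7_14 U7_14 C7_14 D7_15 U7_15 C7_15 D7_16 U7_16 C7_16 D7_17 U7_17 C7_17 D7_18 U7_18 C7_18 D7_19 U7_19 C7_19 D7_20 U7_20 C7_20 D7_21 U7_21 C7_21 D7_22 U7_22 C7_22 D7_23 U7_23 C7_23 D7_24 U7_24 C7_24 D7_25 U7_25 C7_25 D7_26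 U7_26 C7_26

lemma chk7: "\<forall>I\<in>set (ids D7 27). real (card I) - real 27 / 2 =
     sum_list (map (\<lambda>y. C7 ! y * ((if y \<notin> I \<and> set (D7 ! y) \<subseteq> I then 1 else 0)
     - (if y \<in> I \<and> (\<forall>z\<in>set (U7 ! y). z \<notin> I) then 1 else 0))) X7)"
  by (simp add: ids_idsA upt_num nth7 X7_def One_nat_def)

lemma E7_result: "toggle_equiv LambdaE7 root_le (\<lambda>I. \<Sum>p\<in>LambdaE7. ind p I) (\<lambda>I. real (card LambdaE7) / 2)"
proof -
  have tq: "toggle_equiv {..<27} (leT D7) (\<lambda>I. \<Sum>p\<in>{..<27}. ind p I) (\<lambda>I. real (card {..<27::nat}) / 2)"
    by (rule exc_toggle[OF X7_set X7_dist H7 HU7 chk7])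
  show ?thesis using iso_transfer[OF order_iso_inv[OF iso7] _ tq] by simp
qed

theorem theorem3p21:
  fixes P :: "'a set" and le :: "'a \<Rightarrow> 'a \<Rightarrow> bool"
  assumes "minuscule_poset P le"
  shows "toggle_equiv P le (\<lambda>I. \<Sum>p\<in>P. ind p I) (\<lambda>I. real (card P) / 2)"
  using assms unfolding minuscule_poset_def isomorphic_posets_def
proof (elim disjE exE conjE)
  fix a b f assume "1 \<le> a" "1 \<le> b" "order_iso P le (rect a b) prod_le f"
  then show ?thesis using iso_transfer rect_result by (metis finite_SigmaI finite_atLeastAtMost rect_eq)
next
  fix n f assume "1 \<le> n" "order_iso P le (staircase n) prod_le f"
  then show ?thesis using iso_transfer[OF _ staircase_fin stair_result] by blast
next
  fix n f assume "2 \<le> n" "order_iso P le (diamond n) diamond_le f"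
  then show ?thesis using iso_transfer[OF _ diam_fin diam_result] by blast
next
  fix f assume "order_iso P le LambdaE6 root_le f"
  moreover have "finite LambdaE6" by (simp add: LambdaE6_def)
  ultimately show ?thesis using iso_transfer[OF _ _ E6_result] by blast
next
  fix f assume "order_iso P le LambdaE7 root_le f"
  moreover have "finite LambdaE7" by (simp add: LambdaE7_def)
  ultimately show ?thesis using iso_transfer[OF _ _ E7_result] by blast
qed

end
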